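(* The Norton–Sakuma algebra $V_{4A}$ has infinitely many maximal associative subalgebras. However, it has only two non-trivial maximal associative subalgebras.
   Context: $V_{4A}$ is the $5$-dimensional real commutative algebra (with identity and positive definite associative inner product) generated by two $2A$-axes $a_t,a_g$ of the Griess algebra whose involutions $t,g$ have product $tg$ in Monster class $4A$; equivalently, the algebra generated by two Majorana axes (idempotents of length $1$, $\mathrm{ad}$-diagonalizable with eigenvalues in $\{0,1,\frac14,\frac1{32}\}$) whose Majorana involutions have product of order $4$ and with $(a_t,a_g)=\frac1{32}$. It has basis $a_0,a_1,a_2,a_3,v$ with $a_i=\psi(t\rho^i)$ type axes, products $a_i\cdot a_i=a_i$, $v\cdot v=v$, $a_0\cdot a_1=\frac1{64}(3a_0+3a_1+a_2+a_3-3v)$, $a_0\cdot v=\frac1{16}(5a_0-2a_1-a_2-2a_3+3v)$, $a_0\cdot a_2=0$, and the remaining products obtained from the dihedral symmetry of order $8$ permuting indices $i\in\mathbb Z/4$ (generated by $i\mapsto -i$ and $i\mapsto 1-i$) and fixing $v$; $(a_i,a_i)=1$, $(a_i,a_{i\pm1})=\frac1{32}$, $(a_i,a_{i+2})=0$, $(a_i,v)=\frac38$, $(v,v)=2$. For a non-zero idempotent $x\neq\mathbb 1$, $V_x$ is the span of $\{x,\mathbb 1-x\}$; an associative subalgebra is trivial if it equals some $V_x$ (or the subalgebra generated by $0$ or $\mathbb 1$), non-trivial otherwise. Maximal associative means maximal under inclusion among associative subalgebras. *)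

theory Defs
  imports "HOL-Analysis.Analysis"
begin

text \<open>Basis of the Norton-Sakuma algebra V_4A: a_0, a_1, a_2, a_3, v.\<close>
datatype nsb = A0 | A1 | A2 | A3 | Vv

lemma UNIV_nsb: "(UNIV :: nsb set) = {A0, A1, A2, A3, Vv}"
  by (auto intro: nsb.exhaust)

instance nsb :: finite
  by standard (simp add: UNIV_nsb)

type_synonym v4a = "real ^ nsb"

definition e :: "nsb \<Rightarrow> v4a" where
  "e b = axis b 1"

fun aidx :: "nsb \<Rightarrow> int" where
  "aidx A0 = 0" | "aidx A1 = 1" | "aidx A2 = 2" | "aidx A3 = 3" | "aidx Vv = 0"

definition ax :: "int \<Rightarrow> nsb" where
  "ax k = (let m = k mod 4 in if m = 0 then A0 else if m = 1 then A1 else if m = 2 then A2 else A3)"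

definition prod_aa :: "int \<Rightarrow> int \<Rightarrow> v4a" where
  "prod_aa i j =
     (if (j - i) mod 4 = 0 then e (ax i)
      else if (j - i) mod 4 = 2 then 0
      else (1/64) *\<^sub>R (3 *\<^sub>R e (ax i) + 3 *\<^sub>R e (ax j) + e (ax (i + 2)) + e (ax (j + 2))
                         - 3 *\<^sub>R e Vv))"

definition prod_av :: "int \<Rightarrow> v4a" where
  "prod_av i = (1/16) *\<^sub>R (5 *\<^sub>R e (ax i) - 2 *\<^sub>R e (ax (i + 1)) - e (ax (i + 2))
                            - 2 *\<^sub>R e (ax (i + 3)) + 3 *\<^sub>R e Vv)"

definition bmul :: "nsb \<Rightarrow> nsb \<Rightarrow> v4a" where
  "bmul b c =
     (if b = Vv \<and> c = Vv then e Vv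
      else if b = Vv then prod_av (aidx c)
      else if c = Vv then prod_av (aidx b)
      else prod_aa (aidx b) (aidx c))"

definition mult :: "v4a \<Rightarrow> v4a \<Rightarrow> v4a" where
  "mult x y = (\<Sum>b\<in>UNIV. \<Sum>c\<in>UNIV. (x $ b * y $ c) *\<^sub>R bmul b c)"

definition one4A :: v4a where
  "one4A = (THE u. \<forall>x. mult u x = x \<and> mult x u = x)"

definition idempotent :: "v4a \<Rightarrow> bool" where
  "idempotent x \<longleftrightarrow> mult x x = x"

definition Vx :: "v4a \<Rightarrow> v4a set" where
  "Vx x = span {x, one4A - x}"

definition subalgebra :: "v4a set \<Rightarrow> bool" where
  "subalgebra S \<longleftrightarrow> subspace S \<and> (\<forall>x\<in>S. \<forall>y\<in>S. mult x y \<in> S)"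

definition assoc_subalgebra :: "v4a set \<Rightarrow> bool" where
  "assoc_subalgebra S \<longleftrightarrow> subalgebra S \<and>
     (\<forall>x\<in>S. \<forall>y\<in>S. \<forall>z\<in>S. mult (mult x y) z = mult x (mult y z))"

definition max_assoc_subalgebra :: "v4a set \<Rightarrow> bool" where
  "max_assoc_subalgebra S \<longleftrightarrow> assoc_subalgebra S \<and>
     (\<forall>T. assoc_subalgebra T \<and> S \<subseteq> T \<longrightarrow> T = S)"

text \<open>Trivial associative subalgebras: some V_x (x a nonzero idempotent, x \<noteq> 1),
  or the subalgebra generated by 0 (= {0}) or by 1 (= span{1}).\<close>
definition trivial_assoc :: "v4a set \<Rightarrow> bool" where
  "trivial_assoc S \<longleftrightarrow>
     (\<exists>x. idempotent x \<and> x \<noteq> 0 \<and> x \<noteq> one4A \<and> S = Vx x)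
     \<or> S = {0} \<or> S = span {one4A}"

end

theory Submission
  imports Defs
begin


lemma ax_simps[simp]: "ax 0 = A0" "ax 1 = A1" "ax 2 = A2" "ax 3 = A3" "ax 4 = A0" "ax 5 = A1" "ax 6 = A2"
  by (simp_all add: ax_def)

lemma e_nth[simp]: "e b $ c = (if c = b then 1 else 0)"
  by (simp add: e_def axis_def)

lemma sum_nsb: "(\<Sum>b\<in>UNIV. f b) = f A0 + f A1 + f A2 + f A3 + (f Vv :: 'a::comm_monoid_add)"
  by (simp add: UNIV_nsb add.assoc)

lemma mult_A0: "mult x y $ A0 = 1*x$A0*y$A0 + (3/64)*x$A0*y$A1 + (3/64)*x$A0*y$A3 + (5/16)*x$A0*y$Vv + (3/64)*x$A1*y$A0 + (1/64)*x$A1*y$A2 + (-1/8)*x$A1*y$Vv + (1/64)*x$A2*y$A1 + (1/64)*x$A2*y$A3 + (-1/16)*x$A2*y$Vv + (3/64)*x$A3*y$A0 + (1/64)*x$A3*y$A2 + (-1/8)*x$A3*y$Vv + (5/16)*x$Vv*y$A0 + (-1/8)*x$Vv*y$A1 + (-1/16)*x$Vv*y$A2 + (-1/8)*x$Vv*y$A3"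
  by (simp add: mult_def sum_nsb bmul_def prod_aa_def prod_av_def algebra_simps)

lemma mult_A1: "mult x y $ A1 = (3/64)*x$A0*y$A1 + (1/64)*x$A0*y$A3 + (-1/8)*x$A0*y$Vv + (3/64)*x$A1*y$A0 + 1*x$A1*y$A1 + (3/64)*x$A1*y$A2 + (5/16)*x$A1*y$Vv + (3/64)*x$A2*y$A1 + (1/64)*x$A2*y$A3 + (-1/8)*x$A2*y$Vv + (1/64)*x$A3*y$A0 + (1/64)*x$A3*y$A2 + (-1/16)*x$A3*y$Vv + (-1/8)*x$Vv*y$A0 + (5/16)*x$Vv*y$A1 + (-1/8)*x$Vv*y$A2 + (-1/16)*x$Vv*y$A3"
  by (simp add: mult_def sum_nsb bmul_def prod_aa_def prod_av_def algebra_simps)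

lemma mult_A2: "mult x y $ A2 = (1/64)*x$A0*y$A1 + (1/64)*x$A0*y$A3 + (-1/16)*x$A0*y$Vv + (1/64)*x$A1*y$A0 + (3/64)*x$A1*y$A2 + (-1/8)*x$A1*y$Vv + (3/64)*x$A2*y$A1 + 1*x$A2*y$A2 + (3/64)*x$A2*y$A3 + (5/16)*x$A2*y$Vv + (1/64)*x$A3*y$A0 + (3/64)*x$A3*y$A2 + (-1/8)*x$A3*y$Vv + (-1/16)*x$Vv*y$A0 + (-1/8)*x$Vv*y$A1 + (5/16)*x$Vv*y$A2 + (-1/8)*x$Vv*y$A3"
  by (simp add: mult_def sum_nsb bmul_def prod_aa_def prod_av_def algebra_simps)

lemma mult_A3: "mult x y $ A3 = (1/64)*x$A0*y$A1 + (3/64)*x$A0*y$A3 + (-1/8)*x$A0*y$Vv + (1/64)*x$A1*y$A0 + (1/64)*x$A1*y$A2 + (-1/16)*x$A1*y$Vv + (1/64)*x$A2*y$A1 + (3/64)*x$A2*y$A3 + (-1/8)*x$A2*y$Vv + (3/64)*x$A3*y$A0 + (3/64)*x$A3*y$A2 + 1*x$A3*y$A3 + (5/16)*x$A3*y$Vv + (-1/8)*x$Vv*y$A0 + (-1/16)*x$Vv*y$A1 + (-1/8)*x$Vv*y$A2 + (5/16)*x$Vv*y$A3"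
  by (simp add: mult_def sum_nsb bmul_def prod_aa_def prod_av_def algebra_simps)

lemma mult_Vv: "mult x y $ Vv = (-3/64)*x$A0*y$A1 + (-3/64)*x$A0*y$A3 + (3/16)*x$A0*y$Vv + (-3/64)*x$A1*y$A0 + (-3/64)*x$A1*y$A2 + (3/16)*x$A1*y$Vv + (-3/64)*x$A2*y$A1 + (-3/64)*x$A2*y$A3 + (3/16)*x$A2*y$Vv + (-3/64)*x$A3*y$A0 + (-3/64)*x$A3*y$A2 + (3/16)*x$A3*y$Vv + (3/16)*x$Vv*y$A0 + (3/16)*x$Vv*y$A1 + (3/16)*x$Vv*y$A2 + (3/16)*x$Vv*y$A3 + 1*x$Vv*y$Vv"
  by (simp add: mult_def sum_nsb bmul_def prod_aa_def prod_av_def algebra_simps)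


definition mk :: "real \<Rightarrow> real \<Rightarrow> real \<Rightarrow> real \<Rightarrow> real \<Rightarrow> v4a" where
  "mk a b c d f = (\<chi> i. case i of A0 \<Rightarrow> a | A1 \<Rightarrow> b | A2 \<Rightarrow> c | A3 \<Rightarrow> d | Vv \<Rightarrow> f)"

lemma mk_nth[simp]: "mk a b c d f $ A0 = a" "mk a b c d f $ A1 = b" "mk a b c d f $ A2 = c"
  "mk a b c d f $ A3 = d" "mk a b c d f $ Vv = f"
  by (simp_all add: mk_def)

lemma all_nsb: "(\<forall>i. P i) \<longleftrightarrow> P A0 \<and> P A1 \<and> P A2 \<and> P A3 \<and> P Vv"
  by (metis nsb.exhaust)

lemma vec_eq_nsb: "(x::v4a) = y \<longleftrightarrow> x$A0 = y$A0 \<and> x$A1 = y$A1 \<and> x$A2 = y$A2 \<and> x$A3 = y$A3 \<and> x$Vv = y$Vv"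
  by (simp add: vec_eq_iff all_nsb)

lemmas mult_nth = mult_A0 mult_A1 mult_A2 mult_A3 mult_Vv

definition uu :: v4a where "uu = mk (4/5) (4/5) (4/5) (4/5) (2/5)"

lemma mult_uu_left: "mult uu x = x"
  by (simp add: vec_eq_nsb mult_nth uu_def algebra_simps)

lemma mult_uu_right: "mult x uu = x"
  by (simp add: vec_eq_nsb mult_nth uu_def algebra_simps)

lemma one4A_eq: "one4A = uu"
  unfolding one4A_def
proof (rule the_equality)
  show "\<forall>x. mult uu x = x \<and> mult x uu = x" by (simp add: mult_uu_left mult_uu_right)
  fix u assume "\<forall>x. mult u x = x \<and> mult x u = x"
  then have "mult u uu = uu" by blast
  then show "u = uu" by (simp add: mult_uu_right)
qed

lemma mult_comm: "mult x y = mult y x"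
  by (simp add: vec_eq_nsb mult_nth algebra_simps)

lemma mult_add_left: "mult (x + y) z = mult x z + mult y z"
  by (simp add: mult_def algebra_simps sum.distrib scaleR_add_left)

lemma mult_add_right: "mult z (x + y) = mult z x + mult z y"
  by (simp add: mult_def algebra_simps sum.distrib scaleR_add_left)

lemma mult_scale_left: "mult (c *\<^sub>R x) y = c *\<^sub>R mult x y"
  by (simp add: mult_def scaleR_sum_right mult.assoc)

lemma mult_scale_right: "mult y (c *\<^sub>R x) = c *\<^sub>R mult y x"
  by (simp add: mult_def scaleR_sum_right mult.left_commute)

lemma mult_diff_left: "mult (x - y) z = mult x z - mult y z"
  using mult_add_left[of x "-y" z] mult_scale_left[of "-1" y z] by simp

lemma mult_diff_right: "mult z (x - y) = mult z x - mult z y"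
  using mult_add_right[of z x "-y"] mult_scale_right[of z "-1" y] by simp

lemma mult_zero_left[simp]: "mult 0 x = 0" and mult_zero_right[simp]: "mult x 0 = 0"
  by (simp_all add: mult_def)

definition Bf :: "v4a \<Rightarrow> v4a \<Rightarrow> real" where
  "Bf x y = 1*x$A0*y$A0 + (1/32)*x$A0*y$A1 + (1/32)*x$A0*y$A3 + (3/8)*x$A0*y$Vv + (1/32)*x$A1*y$A0 + 1*x$A1*y$A1 + (1/32)*x$A1*y$A2 + (3/8)*x$A1*y$Vv + (1/32)*x$A2*y$A1 + 1*x$A2*y$A2 + (1/32)*x$A2*y$A3 + (3/8)*x$A2*y$Vv + (1/32)*x$A3*y$A0 + (1/32)*x$A3*y$A2 + 1*x$A3*y$A3 + (3/8)*x$A3*y$Vv + (3/8)*x$Vv*y$A0 + (3/8)*x$Vv*y$A1 + (3/8)*x$Vv*y$A2 + (3/8)*x$Vv*y$A3 + 2*x$Vv*y$Vv"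

lemma Bf_sym: "Bf x y = Bf y x"
  by (simp add: Bf_def algebra_simps)

lemma Bf_add_left: "Bf (x + y) z = Bf x z + Bf y z"
  by (simp add: Bf_def algebra_simps add_divide_distrib)
lemma Bf_add_right: "Bf z (x + y) = Bf z x + Bf z y"
  by (simp add: Bf_def algebra_simps add_divide_distrib)
lemma Bf_scale_left: "Bf (c *\<^sub>R x) y = c * Bf x y"
  by (simp add: Bf_def algebra_simps)
lemma Bf_scale_right: "Bf y (c *\<^sub>R x) = c * Bf y x"
  by (simp add: Bf_def algebra_simps)
lemma Bf_diff_left: "Bf (x - y) z = Bf x z - Bf y z"
  using Bf_add_left[of x "-y" z] Bf_scale_left[of "-1" y z] by simp
lemma Bf_diff_right: "Bf z (x - y) = Bf z x - Bf z y"
  using Bf_add_right[of z x "-y"] Bf_scale_right[of z "-1" y] by simp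
lemma Bf_zero[simp]: "Bf 0 x = 0" "Bf x 0 = 0"
  by (simp_all add: Bf_def)

lemma Bf_assoc: "Bf (mult x y) z = Bf x (mult y z)"
  by (simp add: Bf_def mult_nth algebra_simps)

lemma Bf_sos: "Bf x x - (1/2) * ((x$A0)^2 + (x$A1)^2 + (x$A2)^2 + (x$A3)^2 + (x$Vv)^2) = (1/2)*(1*x$A0 + (1/16)*x$A1 + (1/16)*x$A3 + (3/4)*x$Vv)^2 + (255/512)*(1*x$A1 + (16/255)*x$A2 + (-1/255)*x$A3 + (12/17)*x$Vv)^2 + (127/255)*(1*x$A2 + (8/127)*x$A3 + (90/127)*x$Vv)^2 + (63/127)*(1*x$A3 + (2/3)*x$Vv)^2 + (1/2)*(1*x$Vv)^2"
  by (simp add: Bf_def power2_eq_square algebra_simps)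

lemma Bf_lower: "Bf x x \<ge> (1/2) * ((x$A0)^2 + (x$A1)^2 + (x$A2)^2 + (x$A3)^2 + (x$Vv)^2)"
proof -
  have "0 \<le> (1/2)*(1*x$A0 + (1/16)*x$A1 + (1/16)*x$A3 + (3/4)*x$Vv)^2 + (255/512)*(1*x$A1 + (16/255)*x$A2 + (-1/255)*x$A3 + (12/17)*x$Vv)^2 + (127/255)*(1*x$A2 + (8/127)*x$A3 + (90/127)*x$Vv)^2 + (63/127)*(1*x$A3 + (2/3)*x$Vv)^2 + (1/2)*(1*x$Vv)^2" by (intro add_nonneg_nonneg mult_nonneg_nonneg) simp_all
  then show ?thesis using Bf_sos[of x] by linarith
qed

lemma Bf_pos: "x \<noteq> 0 \<Longrightarrow> Bf x x > 0"
proof -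
  assume "x \<noteq> 0"
  then have "(x$A0)^2 + (x$A1)^2 + (x$A2)^2 + (x$A3)^2 + (x$Vv)^2 > 0"
    by (auto simp: vec_eq_nsb add_pos_nonneg add_nonneg_pos)
  then have "(1/2) * ((x$A0)^2 + (x$A1)^2 + (x$A2)^2 + (x$A3)^2 + (x$Vv)^2) > 0" by simp
  then show ?thesis using Bf_lower[of x] by linarith
qed

lemma Bf_nonneg: "Bf x x \<ge> 0"
  using Bf_pos[of x] by (cases "x = 0") auto

lemma Bf_eq0: "Bf x x = 0 \<longleftrightarrow> x = 0"
  using Bf_pos[of x] by (cases "x = 0") auto




lemma idem_eqs_real:
  fixes x0 x1 x2 x3 xv :: real
  assumes H: "1 * x0 * x0 + (3/64) * x0 * x1 + (3/64) * x0 * x3 + (5/16) * x0 * xv + (3/64) * x1 * x0 + (1/64) * x1 * x2 + (-1/8) * x1 * xv + (1/64) * x2 * x1 + (1/64) * x2 * x3 + (-1/16) * x2 * xv + (3/64) * x3 * x0 + (1/64) * x3 * x2 + (-1/8) * x3 * xv + (5/16) * xv * x0 + (-1/8) * xv * x1 + (-1/16) * xv * x2 + (-1/8) * xv * x3 = x0"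
    "(3/64) * x0 * x1 + (1/64) * x0 * x3 + (-1/8) * x0 * xv + (3/64) * x1 * x0 + 1 * x1 * x1 + (3/64) * x1 * x2 + (5/16) * x1 * xv + (3/64) * x2 * x1 + (1/64) * x2 * x3 + (-1/8) * x2 * xv + (1/64) * x3 * x0 + (1/64) * x3 * x2 + (-1/16) * x3 * xv + (-1/8) * xv * x0 + (5/16) * xv * x1 + (-1/8) * xv * x2 + (-1/16) * xv * x3 = x1"
    "(1/64) * x0 * x1 + (1/64) * x0 * x3 + (-1/16) * x0 * xv + (1/64) * x1 * x0 + (3/64) * x1 * x2 + (-1/8) * x1 * xv + (3/64) * x2 * x1 + 1 * x2 * x2 + (3/64) * x2 * x3 + (5/16) * x2 * xv + (1/64) * x3 * x0 + (3/64) * x3 * x2 + (-1/8) * x3 * xv + (-1/16) * xv * x0 + (-1/8) * xv * x1 + (5/16) * xv * x2 + (-1/8) * xv * x3 = x2"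
    "(1/64) * x0 * x1 + (3/64) * x0 * x3 + (-1/8) * x0 * xv + (1/64) * x1 * x0 + (1/64) * x1 * x2 + (-1/16) * x1 * xv + (1/64) * x2 * x1 + (3/64) * x2 * x3 + (-1/8) * x2 * xv + (3/64) * x3 * x0 + (3/64) * x3 * x2 + 1 * x3 * x3 + (5/16) * x3 * xv + (-1/8) * xv * x0 + (-1/16) * xv * x1 + (-1/8) * xv * x2 + (5/16) * xv * x3 = x3"
    "(-3/64) * x0 * x1 + (-3/64) * x0 * x3 + (3/16) * x0 * xv + (-3/64) * x1 * x0 + (-3/64) * x1 * x2 + (3/16) * x1 * xv + (-3/64) * x2 * x1 + (-3/64) * x2 * x3 + (3/16) * x2 * xv + (-3/64) * x3 * x0 + (-3/64) * x3 * x2 + (3/16) * x3 * xv + (3/16) * xv * x0 + (3/16) * xv * x1 + (3/16) * xv * x2 + (3/16) * xv * x3 + 1 * xv * xv = xv"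
  defines "s \<equiv> (x0 + x2)/2" and "a \<equiv> (x0 - x2)/2"
    and "t \<equiv> (x1 + x3)/2" and "b \<equiv> (x1 - x3)/2" and "r \<equiv> xv"
  shows "a^2 + s^2 + s * t/4 + s * r/2 - t * r/2 - s = 0"
    and "b^2 + t^2 + s * t/4 + t * r/2 - s * r/2 - t = 0"
    and "r^2 - 3 * s * t/8 + 3 * s * r/4 + 3 * t * r/4 - r = 0"
    and "a * (2 * s + t/8 + 3 * r/4 - 1) = 0"
    and "b * (2 * t + s/8 + 3 * r/4 - 1) = 0"
proof -
  have HH0: "(1 * x0 * x0 + (3/64) * x0 * x1 + (3/64) * x0 * x3 + (5/16) * x0 * xv + (3/64) * x1 * x0 + (1/64) * x1 * x2 + (-1/8) * x1 * xv + (1/64) * x2 * x1 + (1/64) * x2 * x3 + (-1/16) * x2 * xv + (3/64) * x3 * x0 + (1/64) * x3 * x2 + (-1/8) * x3 * xv + (5/16) * xv * x0 + (-1/8) * xv * x1 + (-1/16) * xv * x2 + (-1/8) * xv * x3 - x0) = 0" using H(1) by linarith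
  have HH1: "((3/64) * x0 * x1 + (1/64) * x0 * x3 + (-1/8) * x0 * xv + (3/64) * x1 * x0 + 1 * x1 * x1 + (3/64) * x1 * x2 + (5/16) * x1 * xv + (3/64) * x2 * x1 + (1/64) * x2 * x3 + (-1/8) * x2 * xv + (1/64) * x3 * x0 + (1/64) * x3 * x2 + (-1/16) * x3 * xv + (-1/8) * xv * x0 + (5/16) * xv * x1 + (-1/8) * xv * x2 + (-1/16) * xv * x3 - x1) = 0" using H(2) by linarith
  have HH2: "((1/64) * x0 * x1 + (1/64) * x0 * x3 + (-1/16) * x0 * xv + (1/64) * x1 * x0 + (3/64) * x1 * x2 + (-1/8) * x1 * xv + (3/64) * x2 * x1 + 1 * x2 * x2 + (3/64) * x2 * x3 + (5/16) * x2 * xv + (1/64) * x3 * x0 + (3/64) * x3 * x2 + (-1/8) * x3 * xv + (-1/16) * xv * x0 + (-1/8) * xv * x1 + (5/16) * xv * x2 + (-1/8) * xv * x3 - x2) = 0" using H(3) by linarith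
  have HH3: "((1/64) * x0 * x1 + (3/64) * x0 * x3 + (-1/8) * x0 * xv + (1/64) * x1 * x0 + (1/64) * x1 * x2 + (-1/16) * x1 * xv + (1/64) * x2 * x1 + (3/64) * x2 * x3 + (-1/8) * x2 * xv + (3/64) * x3 * x0 + (3/64) * x3 * x2 + 1 * x3 * x3 + (5/16) * x3 * xv + (-1/8) * xv * x0 + (-1/16) * xv * x1 + (-1/8) * xv * x2 + (5/16) * xv * x3 - x3) = 0" using H(4) by linarith
  have HH4: "((-3/64) * x0 * x1 + (-3/64) * x0 * x3 + (3/16) * x0 * xv + (-3/64) * x1 * x0 + (-3/64) * x1 * x2 + (3/16) * x1 * xv + (-3/64) * x2 * x1 + (-3/64) * x2 * x3 + (3/16) * x2 * xv + (-3/64) * x3 * x0 + (-3/64) * x3 * x2 + (3/16) * x3 * xv + (3/16) * xv * x0 + (3/16) * xv * x1 + (3/16) * xv * x2 + (3/16) * xv * x3 + 1 * xv * xv - xv) = 0" using H(5) by linarith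
  have "a^2 + s^2 + s * t/4 + s * r/2 - t * r/2 - s = ((1 * x0 * x0 + (3/64) * x0 * x1 + (3/64) * x0 * x3 + (5/16) * x0 * xv + (3/64) * x1 * x0 + (1/64) * x1 * x2 + (-1/8) * x1 * xv + (1/64) * x2 * x1 + (1/64) * x2 * x3 + (-1/16) * x2 * xv + (3/64) * x3 * x0 + (1/64) * x3 * x2 + (-1/8) * x3 * xv + (5/16) * xv * x0 + (-1/8) * xv * x1 + (-1/16) * xv * x2 + (-1/8) * xv * x3 - x0) + ((1/64) * x0 * x1 + (1/64) * x0 * x3 + (-1/16) * x0 * xv + (1/64) * x1 * x0 + (3/64) * x1 * x2 + (-1/8) * x1 * xv + (3/64) * x2 * x1 + 1 * x2 * x2 + (3/64) * x2 * x3 + (5/16) * x2 * xv + (1/64) * x3 * x0 + (3/64) * x3 * x2 + (-1/8) * x3 * xv + (-1/16) * xv * x0 + (-1/8) * xv * x1 + (5/16) * xv * x2 + (-1/8) * xv * x3 - x2))/2"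
    unfolding s_def a_def t_def b_def r_def by (simp add: field_simps power2_eq_square)
  then show "a^2 + s^2 + s * t/4 + s * r/2 - t * r/2 - s = 0" unfolding HH0 HH1 HH2 HH3 HH4 by simp
  have "b^2 + t^2 + s * t/4 + t * r/2 - s * r/2 - t = (((3/64) * x0 * x1 + (1/64) * x0 * x3 + (-1/8) * x0 * xv + (3/64) * x1 * x0 + 1 * x1 * x1 + (3/64) * x1 * x2 + (5/16) * x1 * xv + (3/64) * x2 * x1 + (1/64) * x2 * x3 + (-1/8) * x2 * xv + (1/64) * x3 * x0 + (1/64) * x3 * x2 + (-1/16) * x3 * xv + (-1/8) * xv * x0 + (5/16) * xv * x1 + (-1/8) * xv * x2 + (-1/16) * xv * x3 - x1) + ((1/64) * x0 * x1 + (3/64) * x0 * x3 + (-1/8) * x0 * xv + (1/64) * x1 * x0 + (1/64) * x1 * x2 + (-1/16) * x1 * xv + (1/64) * x2 * x1 + (3/64) * x2 * x3 + (-1/8) * x2 * xv + (3/64) * x3 * x0 + (3/64) * x3 * x2 + 1 * x3 * x3 + (5/16) * x3 * xv + (-1/8) * xv * x0 + (-1/16) * xv * x1 + (-1/8) * xv * x2 + (5/16) * xv * x3 - x3))/2"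
    unfolding s_def a_def t_def b_def r_def by (simp add: field_simps power2_eq_square)
  then show "b^2 + t^2 + s * t/4 + t * r/2 - s * r/2 - t = 0" unfolding HH0 HH1 HH2 HH3 HH4 by simp
  have "r^2 - 3 * s * t/8 + 3 * s * r/4 + 3 * t * r/4 - r = ((-3/64) * x0 * x1 + (-3/64) * x0 * x3 + (3/16) * x0 * xv + (-3/64) * x1 * x0 + (-3/64) * x1 * x2 + (3/16) * x1 * xv + (-3/64) * x2 * x1 + (-3/64) * x2 * x3 + (3/16) * x2 * xv + (-3/64) * x3 * x0 + (-3/64) * x3 * x2 + (3/16) * x3 * xv + (3/16) * xv * x0 + (3/16) * xv * x1 + (3/16) * xv * x2 + (3/16) * xv * x3 + 1 * xv * xv - xv)"
    unfolding s_def a_def t_def b_def r_def by (simp add: field_simps power2_eq_square)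
  then show "r^2 - 3 * s * t/8 + 3 * s * r/4 + 3 * t * r/4 - r = 0" unfolding HH0 HH1 HH2 HH3 HH4 by simp
  have "a * (2 * s + t/8 + 3 * r/4 - 1) = ((1 * x0 * x0 + (3/64) * x0 * x1 + (3/64) * x0 * x3 + (5/16) * x0 * xv + (3/64) * x1 * x0 + (1/64) * x1 * x2 + (-1/8) * x1 * xv + (1/64) * x2 * x1 + (1/64) * x2 * x3 + (-1/16) * x2 * xv + (3/64) * x3 * x0 + (1/64) * x3 * x2 + (-1/8) * x3 * xv + (5/16) * xv * x0 + (-1/8) * xv * x1 + (-1/16) * xv * x2 + (-1/8) * xv * x3 - x0) - ((1/64) * x0 * x1 + (1/64) * x0 * x3 + (-1/16) * x0 * xv + (1/64) * x1 * x0 + (3/64) * x1 * x2 + (-1/8) * x1 * xv + (3/64) * x2 * x1 + 1 * x2 * x2 + (3/64) * x2 * x3 + (5/16) * x2 * xv + (1/64) * x3 * x0 + (3/64) * x3 * x2 + (-1/8) * x3 * xv + (-1/16) * xv * x0 + (-1/8) * xv * x1 + (5/16) * xv * x2 + (-1/8) * xv * x3 - x2))/2"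
    unfolding s_def a_def t_def b_def r_def by (simp add: field_simps power2_eq_square)
  then show "a * (2 * s + t/8 + 3 * r/4 - 1) = 0" unfolding HH0 HH1 HH2 HH3 HH4 by simp
  have "b * (2 * t + s/8 + 3 * r/4 - 1) = (((3/64) * x0 * x1 + (1/64) * x0 * x3 + (-1/8) * x0 * xv + (3/64) * x1 * x0 + 1 * x1 * x1 + (3/64) * x1 * x2 + (5/16) * x1 * xv + (3/64) * x2 * x1 + (1/64) * x2 * x3 + (-1/8) * x2 * xv + (1/64) * x3 * x0 + (1/64) * x3 * x2 + (-1/16) * x3 * xv + (-1/8) * xv * x0 + (5/16) * xv * x1 + (-1/8) * xv * x2 + (-1/16) * xv * x3 - x1) - ((1/64) * x0 * x1 + (3/64) * x0 * x3 + (-1/8) * x0 * xv + (1/64) * x1 * x0 + (1/64) * x1 * x2 + (-1/16) * x1 * xv + (1/64) * x2 * x1 + (3/64) * x2 * x3 + (-1/8) * x2 * xv + (3/64) * x3 * x0 + (3/64) * x3 * x2 + 1 * x3 * x3 + (5/16) * x3 * xv + (-1/8) * xv * x0 + (-1/16) * xv * x1 + (-1/8) * xv * x2 + (5/16) * xv * x3 - x3))/2"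
    unfolding s_def a_def t_def b_def r_def by (simp add: field_simps power2_eq_square)
  then show "b * (2 * t + s/8 + 3 * r/4 - 1) = 0" unfolding HH0 HH1 HH2 HH3 HH4 by simp
qed

lemma idem_eqs:
  assumes "mult x x = x"
  defines "s \<equiv> (x$A0 + x$A2)/2" and "a \<equiv> (x$A0 - x$A2)/2"
    and "t \<equiv> (x$A1 + x$A3)/2" and "b \<equiv> (x$A1 - x$A3)/2" and "r \<equiv> x$Vv"
  shows "a^2 + s^2 + s * t/4 + s * r/2 - t * r/2 - s = 0"
    and "b^2 + t^2 + s * t/4 + t * r/2 - s * r/2 - t = 0"
    and "r^2 - 3 * s * t/8 + 3 * s * r/4 + 3 * t * r/4 - r = 0"
    and "a * (2 * s + t/8 + 3 * r/4 - 1) = 0"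
    and "b * (2 * t + s/8 + 3 * r/4 - 1) = 0"
proof -
  have e0: "mult x x $ A0 = x $ A0" and e1: "mult x x $ A1 = x $ A1" and e2: "mult x x $ A2 = x $ A2"
    and e3: "mult x x $ A3 = x $ A3" and e4: "mult x x $ Vv = x $ Vv" using assms(1) by simp_all
  note R = idem_eqs_real[OF e0[unfolded mult_nth] e1[unfolded mult_nth] e2[unfolded mult_nth] e3[unfolded mult_nth] e4[unfolded mult_nth]]
  show "a^2 + s^2 + s * t/4 + s * r/2 - t * r/2 - s = 0"
    and "b^2 + t^2 + s * t/4 + t * r/2 - s * r/2 - t = 0"
    and "r^2 - 3 * s * t/8 + 3 * s * r/4 + 3 * t * r/4 - r = 0"
    and "a * (2 * s + t/8 + 3 * r/4 - 1) = 0"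
    and "b * (2 * t + s/8 + 3 * r/4 - 1) = 0"
    unfolding s_def a_def t_def b_def r_def using R by simp_all
qed

lemma caseA:
  fixes s t r :: real
  assumes "s^2 + s * t/4 + s * r/2 - t * r/2 - s = 0"
    and "t^2 + s * t/4 + t * r/2 - s * r/2 - t = 0"
    and "r^2 - 3 * s * t/8 + 3 * s * r/4 + 3 * t * r/4 - r = 0"
  shows "(s+t+r) * (s+t+r-1) * (s+t+r-2) = 0"
  using assms by algebra

lemma caseB:
  fixes s t r a :: real
  assumes "a^2 + s^2 + s * t/4 + s * r/2 - t * r/2 - s = 0"
    and "t^2 + s * t/4 + t * r/2 - s * r/2 - t = 0"
    and "r^2 - 3 * s * t/8 + 3 * s * r/4 + 3 * t * r/4 - r = 0"
    and "2 * s + t/8 + 3 * r/4 = 1" and "a \<noteq> 0"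
  shows "(t = 0 \<and> r = 0 \<and> s = 1/2 \<and> a^2 = 1/4) \<or> (t = 4/5 \<and> r = 2/5 \<and> s = 3/10)"
proof -
  have "t * (5 * t-4) = 0" using assms by algebra
  then consider "t = 0" | "t = 4/5" by force
  then show ?thesis
  proof cases
    case 1
    have "r = 0" using assms 1 by algebra
    moreover have "s = 1/2" using assms 1 \<open>r = 0\<close> by algebra
    moreover have "a^2 = 1/4" using assms 1 \<open>r = 0\<close> \<open>s = 1/2\<close> by algebra
    ultimately show ?thesis using 1 by blast
  next
    case 2
    have "r = 2/5" using assms 2 by algebra
    moreover have "s = 3/10" using assms 2 \<open>r = 2/5\<close> by algebra
    ultimately show ?thesis using 2 by blast
  qed
qed

lemma caseD:
  fixes s t r a b :: real
  assumes "a^2 + s^2 + s * t/4 + s * r/2 - t * r/2 - s = 0"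
    and "b^2 + t^2 + s * t/4 + t * r/2 - s * r/2 - t = 0"
    and "r^2 - 3 * s * t/8 + 3 * s * r/4 + 3 * t * r/4 - r = 0"
    and "2 * s + t/8 + 3 * r/4 = 1" and "2 * t + s/8 + 3 * r/4 = 1"
  shows "(7 * (s+t+r)-6) * (7 * (s+t+r)-8) = 0"
  using assms by algebra

definition tr :: "v4a \<Rightarrow> real" where "tr x = Bf x uu"

lemma tr_coord: "tr x = x$A0 + x$A1 + x$A2 + x$A3 + 2 * x$Vv"
  by (simp add: tr_def Bf_def uu_def)

lemma idem_trace:
  assumes "mult x x = x"
  shows "tr x \<in> {0, 1, 12/7, 2, 16/7, 3, 4}"
    and "tr x = 1 \<Longrightarrow> x = e A0 \<or> x = e A1 \<or> x = e A2 \<or> x = e A3"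
proof -
  define s where "s \<equiv> (x$A0 + x$A2)/2"
  define a where "a \<equiv> (x$A0 - x$A2)/2"
  define t where "t \<equiv> (x$A1 + x$A3)/2"
  define b where "b \<equiv> (x$A1 - x$A3)/2"
  define r where "r \<equiv> x$Vv"
  note E = idem_eqs[OF assms, folded s_def a_def t_def b_def r_def]
  have trx: "tr x = 2 * (s + t + r)" unfolding tr_coord s_def t_def r_def by (simp add: field_simps)
  have x0: "x$A0 = s + a" and x2: "x$A2 = s - a" and x1: "x$A1 = t + b" and x3: "x$A3 = t - b"
    and xv: "x$Vv = r"
    unfolding s_def a_def t_def b_def r_def by (simp_all add: field_simps)
  have "tr x \<in> {0, 1, 12/7, 2, 16/7, 3, 4} \<and> (tr x = 1 \<longrightarrow> x = e A0 \<or> x = e A1 \<or> x = e A2 \<or> x = e A3)"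
  proof (cases "a = 0")
    case a0: True
    show ?thesis
    proof (cases "b = 0")
      case b0: True
      have "(s+t+r) * (s+t+r-1) * (s+t+r-2) = 0"
        using caseA[of s t r] E a0 b0 by simp
      then have "s+t+r = 0 \<or> s+t+r = 1 \<or> s+t+r = 2" by auto
      then show ?thesis using trx by auto
    next
      case b0: False
      have L: "2 * t + s/8 + 3 * r/4 = 1" using E(5) b0 by simp
      have E1': "b^2 + t^2 + t * s/4 + t * r/2 - s * r/2 - t = 0" using E(2) by (simp add: algebra_simps)
      have E2': "s^2 + t * s/4 + s * r/2 - t * r/2 - s = 0" using E(1) a0 by (simp add: algebra_simps)
      have E3': "r^2 - 3 * t * s/8 + 3 * t * r/4 + 3 * s * r/4 - r = 0" using E(3) by (simp add: algebra_simps)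
      from caseB[OF E1' E2' E3' L b0]
      have "(s = 0 \<and> r = 0 \<and> t = 1/2 \<and> b^2 = 1/4) \<or> (s = 4/5 \<and> r = 2/5 \<and> t = 3/10)" .
      then show ?thesis
      proof
        assume h: "s = 0 \<and> r = 0 \<and> t = 1/2 \<and> b^2 = 1/4"
        then have "(b - 1/2) * (b + 1/2) = 0" by (simp add: algebra_simps power2_eq_square)
        then have "b - 1/2 = 0 \<or> b + 1/2 = 0" by (simp only: mult_eq_0_iff)
        then have "x = e A1 \<or> x = e A3"
        proof
          assume "b - 1/2 = 0" then have "b = 1/2" by linarith
          then show ?thesis by (simp add: vec_eq_nsb x0 x1 x2 x3 xv a0 h)
        next
          assume "b + 1/2 = 0" then have "b = -1/2" by linarith
          then show ?thesis by (simp add: vec_eq_nsb x0 x1 x2 x3 xv a0 h)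
        qed
        moreover have "tr x = 1" using trx h by simp
        ultimately show ?thesis by blast
      next
        assume h: "s = 4/5 \<and> r = 2/5 \<and> t = 3/10"
        then show ?thesis using trx by auto
      qed
    qed
  next
    case a0: False
    have L1: "2 * s + t/8 + 3 * r/4 = 1" using E(4) a0 by simp
    show ?thesis
    proof (cases "b = 0")
      case b0: True
      have E2'': "t^2 + s * t/4 + t * r/2 - s * r/2 - t = 0" using E(2) b0 by simp
      from caseB[OF E(1) E2'' E(3) L1 a0]
      have "(t = 0 \<and> r = 0 \<and> s = 1/2 \<and> a^2 = 1/4) \<or> (t = 4/5 \<and> r = 2/5 \<and> s = 3/10)" .
      then show ?thesis
      proof
        assume h: "t = 0 \<and> r = 0 \<and> s = 1/2 \<and> a^2 = 1/4"
        then have "(a - 1/2) * (a + 1/2) = 0" by (simp add: algebra_simps power2_eq_square)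
        then have "a - 1/2 = 0 \<or> a + 1/2 = 0" by (simp only: mult_eq_0_iff)
        then have "x = e A0 \<or> x = e A2"
        proof
          assume "a - 1/2 = 0" then have "a = 1/2" by linarith
          then show ?thesis by (simp add: vec_eq_nsb x0 x1 x2 x3 xv b0 h)
        next
          assume "a + 1/2 = 0" then have "a = -1/2" by linarith
          then show ?thesis by (simp add: vec_eq_nsb x0 x1 x2 x3 xv b0 h)
        qed
        moreover have "tr x = 1" using trx h by simp
        ultimately show ?thesis by blast
      next
        assume h: "t = 4/5 \<and> r = 2/5 \<and> s = 3/10"
        then show ?thesis using trx by auto
      qed
    next
      case b0: False
      have L2: "2 * t + s/8 + 3 * r/4 = 1" using E(5) b0 by simp
      have "(7 * (s+t+r)-6) * (7 * (s+t+r)-8) = 0" using caseD[OF E(1) E(2) E(3) L1 L2] .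
      then have "s+t+r = 6/7 \<or> s+t+r = 8/7" by auto
      then show ?thesis using trx by auto
    qed
  qed
  then show "tr x \<in> {0, 1, 12/7, 2, 16/7, 3, 4}"
    and "tr x = 1 \<Longrightarrow> x = e A0 \<or> x = e A1 \<or> x = e A2 \<or> x = e A3" by auto
qed




abbreviation NN :: "v4a \<Rightarrow> real" where "NN z \<equiv> Bf z z"
abbreviation PH :: "v4a \<Rightarrow> real" where "PH z \<equiv> Bf (mult z z) z"

lemma NN_expand: "NN (z + t *\<^sub>R w) = NN z + 2 * t * Bf z w + t^2 * NN w"
  by (simp add: Bf_add_left Bf_add_right Bf_scale_left Bf_scale_right Bf_sym[of w z] algebra_simps power2_eq_square)

lemma Bf_mult_swap: "Bf (mult w z) z = Bf (mult z z) w"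
  by (metis Bf_assoc Bf_sym mult_comm)

lemma Bf_mult_swap2: "Bf (mult z w) w = Bf (mult w w) z"
  by (metis Bf_assoc Bf_sym mult_comm)

lemma mult_square_expand: "mult (z + t *\<^sub>R w) (z + t *\<^sub>R w) = mult z z + (2 * t) *\<^sub>R mult z w + (t^2) *\<^sub>R mult w w"
  by (simp add: vec_eq_nsb mult_nth field_simps power2_eq_square)

lemma PH_expand: "PH (z + t *\<^sub>R w) = PH z + 3 * t * Bf (mult z z) w + 3 * t^2 * Bf (mult w w) z + t^3 * PH w"
proof -
  have "PH (z + t *\<^sub>R w) = Bf (mult z z + (2 * t) *\<^sub>R mult z w + (t^2) *\<^sub>R mult w w) (z + t *\<^sub>R w)"
    by (simp add: mult_square_expand)
  also have "\<dots> = PH z + t * Bf (mult z z) w + 2 * t * Bf (mult z w) z + 2 * t * t * Bf (mult z w) w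
      + t^2 * Bf (mult w w) z + t^2 * t * PH w"
    by (simp add: Bf_add_left Bf_add_right Bf_scale_left Bf_scale_right algebra_simps)
  also have "Bf (mult z w) z = Bf (mult z z) w" using Bf_mult_swap[of w z] by (simp add: mult_comm)
  also have "Bf (mult z w) w = Bf (mult w w) z" by (rule Bf_mult_swap2)
  finally show ?thesis by (simp add: algebra_simps power2_eq_square power3_eq_cube)
qed

lemma NN_scale: "NN (c *\<^sub>R z) = c^2 * NN z"
  by (simp add: Bf_scale_left Bf_scale_right power2_eq_square)

lemma PH_scale: "PH (c *\<^sub>R z) = c^3 * PH z"
  by (simp add: Bf_scale_left Bf_scale_right mult_scale_left mult_scale_right power3_eq_cube)

lemma poly_eventually_pos:
  fixes c0 c1 c2 c3 c4 :: real
  assumes "c0 > 0"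
  shows "eventually (\<lambda>t. c0 + c1 * t + c2 * t^2 + c3 * t^3 + c4 * t^4 > 0) (at_right 0)"
proof -
  have "((\<lambda>t. c0 + c1 * t + c2 * t^2 + c3 * t^3 + c4 * t^4) \<longlongrightarrow> c0 + c1 * 0 + c2 * 0^2 + c3 * 0^3 + c4 * 0^4) (at_right 0)"
    by (intro tendsto_intros)
  then have "((\<lambda>t. c0 + c1 * t + c2 * t^2 + c3 * t^3 + c4 * t^4) \<longlongrightarrow> c0) (at_right 0)" by simp
  from order_tendstoD(1)[OF this assms] show ?thesis .
qed

lemma exists_pos_small:
  assumes "eventually P (at_right (0::real))"
  shows "\<exists>t>0. P t"
proof -
  have "eventually (\<lambda>t. P t \<and> t > 0) (at_right (0::real))"
    using assms eventually_at_right_less[of 0] by (auto elim: eventually_elim2)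
  then show ?thesis using eventually_happens[of _ "at_right (0::real)"] by (auto simp: trivial_limit_at_right_real)
qed

lemma poly_nonpos_lin0:
  fixes b c d e :: real
  assumes "\<And>t. b * t + c * t^2 + d * t^3 + e * t^4 \<le> 0"
  shows "b = 0"
proof (rule ccontr)
  assume "b \<noteq> 0"
  then consider "b > 0" | "b < 0" by linarith
  then show False
  proof cases
    case 1
    obtain t where t: "t > 0" "b + c * t + d * t^2 + e * t^3 + 0 * t^4 > 0"
      using exists_pos_small[OF poly_eventually_pos[OF 1, of c d e 0]] by blast
    have h: "b + c * t + d * t^2 + e * t^3 > 0" using t(2) by simp
    then have "t * (b + c * t + d * t^2 + e * t^3) > 0" using t(1) by simp
    moreover have "t * (b + c * t + d * t^2 + e * t^3) = b * t + c * t^2 + d * t^3 + e * t^4"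
      by (simp add: algebra_simps power2_eq_square power3_eq_cube power4_eq_xxxx)
    ultimately show False using assms[of t] by linarith
  next
    case 2
    then have "-b > 0" by simp
    obtain t where t: "t > 0" "-b + c * t + (-d) * t^2 + e * t^3 + 0 * t^4 > 0"
      using exists_pos_small[OF poly_eventually_pos[OF \<open>-b > 0\<close>, of c "-d" e 0]] by blast
    have h: "-b + c * t + (-d) * t^2 + e * t^3 > 0" using t(2) by simp
    then have "t * (-b + c * t + (-d) * t^2 + e * t^3) > 0" using t(1) by simp
    moreover have "t * (-b + c * t + (-d) * t^2 + e * t^3) = b * (-t) + c * (-t)^2 + d * (-t)^3 + e * (-t)^4"
      by (simp add: algebra_simps power2_eq_square power3_eq_cube power4_eq_xxxx)
    ultimately show False using assms[of "-t"] by linarith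
  qed
qed


lemma cont_NN: "continuous_on A (\<lambda>z. NN z)"
  unfolding Bf_def by (intro continuous_intros)

lemma cont_PH: "continuous_on A (\<lambda>z. PH z)"
  unfolding Bf_def mult_nth by (intro continuous_intros)

lemma sqrt_le_self: "x \<ge> 1 \<Longrightarrow> sqrt x \<le> (x::real)"
proof -
  assume x: "x \<ge> 1"
  then have s1: "sqrt x \<ge> 1" by simp
  have "sqrt x * sqrt x = x" using x by simp
  moreover have "sqrt x * 1 \<le> sqrt x * sqrt x" using s1 by (intro mult_left_mono) simp_all
  ultimately show ?thesis by simp
qed

lemma sq_bound: "(c::real)^2 \<le> 2 \<Longrightarrow> \<bar>c\<bar> \<le> 2"
proof -
  assume "c^2 \<le> 2"
  then have "\<bar>c\<bar>^2 \<le> 2^2" by simp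
  then show "\<bar>c\<bar> \<le> 2" by (rule power2_le_imp_le) simp
qed

lemma comp_bound: "NN z = 1 \<Longrightarrow> norm z \<le> 10"
proof -
  assume h: "NN z = 1"
  have b: "(z$A0)^2 + (z$A1)^2 + (z$A2)^2 + (z$A3)^2 + (z$Vv)^2 \<le> 2" using Bf_lower[of z] h by simp
  have p: "0 \<le> (z$A0)^2" "0 \<le> (z$A1)^2" "0 \<le> (z$A2)^2" "0 \<le> (z$A3)^2" "0 \<le> (z$Vv)^2" by simp_all
  have "\<bar>z$A0\<bar> \<le> 2" by (rule sq_bound) (use b p in linarith)
  moreover have "\<bar>z$A1\<bar> \<le> 2" by (rule sq_bound) (use b p in linarith)
  moreover have "\<bar>z$A2\<bar> \<le> 2" by (rule sq_bound) (use b p in linarith)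
  moreover have "\<bar>z$A3\<bar> \<le> 2" by (rule sq_bound) (use b p in linarith)
  moreover have "\<bar>z$Vv\<bar> \<le> 2" by (rule sq_bound) (use b p in linarith)
  moreover have "norm z \<le> \<bar>z$A0\<bar> + \<bar>z$A1\<bar> + \<bar>z$A2\<bar> + \<bar>z$A3\<bar> + \<bar>z$Vv\<bar>"
    using norm_le_l1_cart[of z] by (simp add: sum_nsb)
  ultimately show ?thesis by linarith
qed
lemma exists_idem:
  assumes S: "subspace S" and cl: "\<And>x y. x \<in> S \<Longrightarrow> y \<in> S \<Longrightarrow> mult x y \<in> S"
    and uS: "u \<in> S" and unit: "\<And>s. s \<in> S \<Longrightarrow> mult u s = s"
    and w0S: "w0 \<in> S" and w0u: "w0 \<notin> span {u}"
  shows "\<exists>e\<in>S. mult e e = e \<and> e \<noteq> 0 \<and> e \<noteq> u"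
proof -
  have u0: "u \<noteq> 0"
  proof
    assume "u = 0"
    then have "w0 = 0" using unit[OF w0S] by simp
    then show False using w0u span_zero by blast
  qed
  define a where "a = NN u"
  have apos: "a > 0" using Bf_pos[OF u0] a_def by simp
  have uu_u: "mult u u = u" using unit[OF uS] .
  have PHu: "PH u = a" using uu_u a_def by simp
  define K where "K = {z \<in> S. NN z = 1}"
  have closedK: "closed K"
  proof -
    have "K = S \<inter> {z. NN z = 1}" unfolding K_def by blast
    moreover have "closed {z. NN z = 1}"
      by (rule closed_Collect_eq) (simp_all add: cont_NN continuous_on_const)
    ultimately show ?thesis using closed_subspace[OF S] by (simp add: closed_Int)
  qed
  have boundedK: "bounded K"
    unfolding bounded_iff K_def using comp_bound by blast
  have compK: "compact K" using closedK boundedK by (simp add: compact_eq_bounded_closed)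
  define u1 where "u1 = (1 / sqrt a) *\<^sub>R u"
  have u1K: "u1 \<in> K"
  proof -
    have "u1 \<in> S" unfolding u1_def using S uS by (simp add: subspace_scale)
    moreover have "NN u1 = 1" unfolding u1_def NN_scale using apos a_def
      by (simp add: power_divide)
    ultimately show ?thesis unfolding K_def by blast
  qed
  then have Kne: "K \<noteq> {}" by blast
  obtain z0 where z0K: "z0 \<in> K" and zmax: "\<And>z. z \<in> K \<Longrightarrow> PH z \<le> PH z0"
    using continuous_attains_sup[OF compK Kne cont_PH] by blast
  define M where "M = PH z0"
  have z0S: "z0 \<in> S" and Nz0: "NN z0 = 1" using z0K unfolding K_def by auto
  have Mpos: "M > 0"
  proof -
    have "PH u1 = (1 / sqrt a)^3 * a" unfolding u1_def PH_scale PHu ..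
    moreover have "(1 / sqrt a)^3 * a > 0" using apos by simp
    ultimately show ?thesis using zmax[OF u1K] M_def by linarith
  qed
  have KI: "\<And>z. z \<in> S \<Longrightarrow> z \<noteq> 0 \<Longrightarrow> PH z \<le> M * NN z * sqrt (NN z)"
  proof -
    fix z assume zS: "z \<in> S" and z0: "z \<noteq> 0"
    define n where "n = NN z"
    have npos: "n > 0" using Bf_pos[OF z0] n_def by simp
    define z' where "z' = (1 / sqrt n) *\<^sub>R z"
    have "z' \<in> S" unfolding z'_def using S zS by (simp add: subspace_scale)
    moreover have "NN z' = 1" unfolding z'_def NN_scale n_def[symmetric] using npos
      by (simp add: power_divide)
    ultimately have "z' \<in> K" unfolding K_def by blast
    then have "PH z' \<le> M" using zmax M_def by blast
    then have h: "(1 / sqrt n)^3 * PH z \<le> M" unfolding z'_def PH_scale .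
    have sq: "sqrt n ^ 3 = n * sqrt n" using npos
      by (simp add: power3_eq_cube)
    have "PH z = sqrt n ^ 3 * ((1 / sqrt n)^3 * PH z)" using npos by (simp add: power_divide)
    also have "\<dots> \<le> sqrt n ^ 3 * M" using h npos by (intro mult_left_mono) simp_all
    finally show "PH z \<le> M * NN z * sqrt (NN z)" using sq n_def by (simp add: algebra_simps)
  qed
  have stat: "\<And>w. w \<in> S \<Longrightarrow> Bf z0 w = 0 \<Longrightarrow> Bf (mult z0 z0) w = 0"
  proof -
    fix w assume wS: "w \<in> S" and orth: "Bf z0 w = 0"
    define n where "n = NN w"
    have n0: "n \<ge> 0" using Bf_nonneg n_def by simp
    define \<beta> where "\<beta> = Bf (mult z0 z0) w"
    define \<gamma> where "\<gamma> = Bf (mult w w) z0"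
    define \<delta> where "\<delta> = PH w"
    have "\<And>t. (3 * \<beta>) * t + (3 * \<gamma> - 2 * M * n) * t^2 + \<delta> * t^3 + (- M * n^2) * t^4 \<le> 0"
    proof -
      fix t :: real
      let ?z = "z0 + t *\<^sub>R w"
      have zS: "?z \<in> S" using S z0S wS by (simp add: subspace_add subspace_scale)
      have Nz: "NN ?z = 1 + t^2 * n" unfolding NN_expand Nz0 orth n_def by simp
      have N1: "NN ?z \<ge> 1" using Nz n0 by simp
      then have "?z \<noteq> 0" by auto
      from KI[OF zS this] have "PH ?z \<le> M * NN ?z * sqrt (NN ?z)" .
      also have "\<dots> \<le> M * NN ?z * NN ?z"
        using Mpos N1 sqrt_le_self[OF N1] by (intro mult_left_mono) simp_all
      finally have "PH ?z \<le> M * (1 + t^2 * n) * (1 + t^2 * n)" unfolding Nz .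
      moreover have "PH ?z = M + 3 * t * \<beta> + 3 * t^2 * \<gamma> + t^3 * \<delta>"
        unfolding PH_expand M_def \<beta>_def \<gamma>_def \<delta>_def ..
      ultimately show "(3 * \<beta>) * t + (3 * \<gamma> - 2 * M * n) * t^2 + \<delta> * t^3 + (- M * n^2) * t^4 \<le> 0"
        by (simp add: algebra_simps power2_eq_square power3_eq_cube power4_eq_xxxx)
    qed
    from poly_nonpos_lin0[OF this] show "Bf (mult z0 z0) w = 0" using \<beta>_def by simp
  qed
  define w' where "w' = mult z0 z0 - M *\<^sub>R z0"
  have w'S: "w' \<in> S" unfolding w'_def using S cl[OF z0S z0S] z0S by (simp add: subspace_diff subspace_scale)
  have "Bf z0 w' = 0" unfolding w'_def Bf_diff_right Bf_scale_right Nz0 M_def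
    by (simp add: Bf_sym)
  from stat[OF w'S this] have "Bf (mult z0 z0) w' = 0" .
  moreover have "NN w' = Bf (mult z0 z0) w' - M * Bf z0 w'"
    by (subst (1) w'_def) (simp add: Bf_diff_left Bf_scale_left)
  ultimately have "NN w' = 0" using \<open>Bf z0 w' = 0\<close> by simp
  then have "w' = 0" by (simp add: Bf_eq0)
  then have sqz: "mult z0 z0 = M *\<^sub>R z0" unfolding w'_def by simp
  define e where "e = (1 / M) *\<^sub>R z0"
  have eS: "e \<in> S" unfolding e_def using S z0S by (simp add: subspace_scale)
  have ee: "mult e e = e" unfolding e_def mult_scale_left mult_scale_right sqz using Mpos
    by (simp add: power2_eq_square)
  have z0ne: "z0 \<noteq> 0" using Nz0 by auto
  have ene: "e \<noteq> 0" unfolding e_def using z0ne Mpos by simp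
  have eu: "e \<noteq> u"
  proof
    assume "e = u"
    then have z0u: "z0 = M *\<^sub>R u" unfolding e_def using Mpos by auto
    have Ma: "M^2 * a = 1" using Nz0 unfolding z0u NN_scale a_def .
    define w where "w = w0 - (Bf w0 u / a) *\<^sub>R u"
    have wS: "w \<in> S" unfolding w_def using S w0S uS by (simp add: subspace_diff subspace_scale)
    have wne: "w \<noteq> 0"
    proof
      assume "w = 0"
      then have "w0 = (Bf w0 u / a) *\<^sub>R u" unfolding w_def by simp
      then have "w0 \<in> span {u}" by (metis span_base span_scale insertI1)
      then show False using w0u by blast
    qed
    have uw: "Bf u w = 0" unfolding w_def Bf_diff_right Bf_scale_right using apos a_def
      by (simp add: Bf_sym)
    define n where "n = NN w"
    have npos: "n > 0" using Bf_pos[OF wne] n_def by simp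
    define k where "k = PH w"
    have wu: "mult w u = w" using unit[OF wS] by (simp add: mult_comm)
    have ev: "eventually (\<lambda>t. (3*a^2*n) + (2*a^2*k) * t + (6*a*n^2) * t^2 + (6*a*n*k) * t^3 + (a*k^2 - n^3) * t^4 > 0
        \<and> a + 0 * t + (3*n) * t^2 + k * t^3 + 0 * t^4 > 0) (at_right 0)"
      using apos npos by (intro eventually_conj poly_eventually_pos) simp_all
    obtain t where tpos: "t > 0"
      and Q: "(3*a^2*n) + (2*a^2*k) * t + (6*a*n^2) * t^2 + (6*a*n*k) * t^3 + (a*k^2 - n^3) * t^4 > 0"
      and P: "a + 0 * t + (3*n) * t^2 + k * t^3 + 0 * t^4 > 0"
      using exists_pos_small[OF ev] by blast
    let ?z = "u + t *\<^sub>R w"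
    have zS: "?z \<in> S" using S uS wS by (simp add: subspace_add subspace_scale)
    have Nz: "NN ?z = a + t^2 * n" unfolding NN_expand uw n_def a_def by simp
    have PHz: "PH ?z = a + 3 * n * t^2 + k * t^3"
    proof -
      have "Bf (mult u u) w = 0" using uu_u uw by simp
      moreover have "Bf (mult w w) u = n" using Bf_assoc[of w w u] wu n_def by simp
      ultimately show ?thesis unfolding PH_expand PHu k_def by (simp add: algebra_simps)
    qed
    have Npos: "NN ?z > 0" using Nz apos npos by (simp add: add_pos_nonneg)
    then have "?z \<noteq> 0" by auto
    from KI[OF zS this] have le: "PH ?z \<le> M * NN ?z * sqrt (NN ?z)" .
    have PHpos: "PH ?z > 0" using P PHz by simp
    have ident: "a * (PH ?z)^2 - (NN ?z)^3 = t^2 * ((3*a^2*n) + (2*a^2*k) * t + (6*a*n^2) * t^2 + (6*a*n*k) * t^3 + (a*k^2 - n^3) * t^4)"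
      unfolding PHz Nz by (simp add: algebra_simps power2_eq_square power3_eq_cube power4_eq_xxxx)
    have "t^2 * ((3*a^2*n) + (2*a^2*k) * t + (6*a*n^2) * t^2 + (6*a*n*k) * t^3 + (a*k^2 - n^3) * t^4) > 0"
      using tpos Q by simp
    then have gt: "a * (PH ?z)^2 > (NN ?z)^3" using ident by linarith
    have "(M * NN ?z * sqrt (NN ?z))^2 = M^2 * (NN ?z)^3"
      using Npos by (simp add: power_mult_distrib power3_eq_cube power2_eq_square)
    also have "\<dots> = (NN ?z)^3 / a" using Ma apos by (simp add: field_simps)
    also have "\<dots> < (PH ?z)^2" using gt apos by (simp add: field_simps)
    finally have "(M * NN ?z * sqrt (NN ?z))^2 < (PH ?z)^2" .
    then have "M * NN ?z * sqrt (NN ?z) < PH ?z"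
      by (rule power_less_imp_less_base) (use PHpos in linarith)
    then show False using le by linarith
  qed
  show ?thesis using eS ee ene eu by blast
qed




definition S1 :: "v4a set" where "S1 = {y. y$A1 = 2 * y$Vv \<and> y$A3 = 2 * y$Vv}"
definition S2 :: "v4a set" where "S2 = {y. y$A0 = 2 * y$Vv \<and> y$A2 = 2 * y$Vv}"

lemma span_pair_iff: "x \<in> span {p, q} \<longleftrightarrow> (\<exists>\<alpha> \<beta>. x = \<alpha> *\<^sub>R p + \<beta> *\<^sub>R q)"
proof -
  have "x \<in> span {p, q} \<longleftrightarrow> (\<exists>k. x - k *\<^sub>R p \<in> span {q})" by (rule span_breakdown_eq)
  also have "\<dots> \<longleftrightarrow> (\<exists>k l. x - k *\<^sub>R p = l *\<^sub>R q)" by (auto simp: span_singleton)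
  also have "\<dots> \<longleftrightarrow> (\<exists>\<alpha> \<beta>. x = \<alpha> *\<^sub>R p + \<beta> *\<^sub>R q)" by (metis add_diff_cancel_left' diff_add_cancel add.commute)
  finally show ?thesis .
qed

lemma Ea0: "mult (e A0) (mult (e A0) y) = mult (e A0) y \<Longrightarrow> y \<in> S1"
  unfolding S1_def by (simp add: vec_eq_nsb mult_nth field_simps)
lemma Ea2: "mult (e A2) (mult (e A2) y) = mult (e A2) y \<Longrightarrow> y \<in> S1"
  unfolding S1_def by (simp add: vec_eq_nsb mult_nth field_simps)
lemma Ea1: "mult (e A1) (mult (e A1) y) = mult (e A1) y \<Longrightarrow> y \<in> S2"
  unfolding S2_def by (simp add: vec_eq_nsb mult_nth field_simps)
lemma Ea3: "mult (e A3) (mult (e A3) y) = mult (e A3) y \<Longrightarrow> y \<in> S2"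
  unfolding S2_def by (simp add: vec_eq_nsb mult_nth field_simps)

lemma mult_e_e: "mult (e b) (e b) = e b"
  by (cases b) (simp_all add: vec_eq_nsb mult_nth)

lemma S1_subspace: "subspace S1"
  unfolding subspace_def S1_def by auto
lemma S2_subspace: "subspace S2"
  unfolding subspace_def S2_def by auto

lemma S1_closed: "x \<in> S1 \<Longrightarrow> y \<in> S1 \<Longrightarrow> mult x y \<in> S1"
  unfolding S1_def by (simp add: mult_nth field_simps)
lemma S2_closed: "x \<in> S2 \<Longrightarrow> y \<in> S2 \<Longrightarrow> mult x y \<in> S2"
  unfolding S2_def by (simp add: mult_nth field_simps)

lemma S1_assoc: "x \<in> S1 \<Longrightarrow> y \<in> S1 \<Longrightarrow> z \<in> S1 \<Longrightarrow> mult (mult x y) z = mult x (mult y z)"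
  unfolding S1_def by (simp add: vec_eq_nsb mult_nth field_simps)
lemma S2_assoc: "x \<in> S2 \<Longrightarrow> y \<in> S2 \<Longrightarrow> z \<in> S2 \<Longrightarrow> mult (mult x y) z = mult x (mult y z)"
  unfolding S2_def by (simp add: vec_eq_nsb mult_nth field_simps)




lemma S1_assoc_sub: "assoc_subalgebra S1"
  unfolding assoc_subalgebra_def subalgebra_def using S1_subspace S1_closed S1_assoc by blast
lemma S2_assoc_sub: "assoc_subalgebra S2"
  unfolding assoc_subalgebra_def subalgebra_def using S2_subspace S2_closed S2_assoc by blast

lemma in_S1: "e A0 \<in> S1" "e A2 \<in> S1" "uu \<in> S1"
  by (simp_all add: S1_def uu_def)
lemma in_S2: "e A1 \<in> S2" "e A3 \<in> S2" "uu \<in> S2"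
  by (simp_all add: S2_def uu_def)
lemma eA0_notin_S2: "e A0 \<notin> S2"
  by (simp add: S2_def)
lemma eA1_notin_S1: "e A1 \<notin> S1"
  by (simp add: S1_def)

lemma S1_sub: assumes "subspace S" "e A0 \<in> S" "e A2 \<in> S" "uu \<in> S" shows "S1 \<subseteq> S"
proof
  fix y assume y: "y \<in> S1"
  have "y = (y$A0 - 2 * y$Vv) *\<^sub>R e A0 + (y$A2 - 2 * y$Vv) *\<^sub>R e A2 + (5/2 * y$Vv) *\<^sub>R uu"
    using y by (simp add: vec_eq_nsb uu_def S1_def)
  also have "\<dots> \<in> S" using assms by (intro subspace_add subspace_scale) simp_all
  finally show "y \<in> S" .
qed

lemma S2_sub: assumes "subspace S" "e A1 \<in> S" "e A3 \<in> S" "uu \<in> S" shows "S2 \<subseteq> S"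
proof
  fix y assume y: "y \<in> S2"
  have "y = (y$A1 - 2 * y$Vv) *\<^sub>R e A1 + (y$A3 - 2 * y$Vv) *\<^sub>R e A3 + (5/2 * y$Vv) *\<^sub>R uu"
    using y by (simp add: vec_eq_nsb uu_def S2_def)
  also have "\<dots> \<in> S" using assms by (intro subspace_add subspace_scale) simp_all
  finally show "y \<in> S" .
qed

lemma assoc_E:
  assumes "assoc_subalgebra S" "a \<in> S" "mult a a = a" "y \<in> S"
  shows "mult a (mult a y) = mult a y"
  using assms unfolding assoc_subalgebra_def by metis

lemma S_le_S1: "assoc_subalgebra S \<Longrightarrow> e A0 \<in> S \<Longrightarrow> S \<subseteq> S1"
  using assoc_E Ea0 mult_e_e by blast
lemma S_le_S1': "assoc_subalgebra S \<Longrightarrow> e A2 \<in> S \<Longrightarrow> S \<subseteq> S1"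
  using assoc_E Ea2 mult_e_e by blast
lemma S_le_S2: "assoc_subalgebra S \<Longrightarrow> e A1 \<in> S \<Longrightarrow> S \<subseteq> S2"
  using assoc_E Ea1 mult_e_e by blast
lemma S_le_S2': "assoc_subalgebra S \<Longrightarrow> e A3 \<in> S \<Longrightarrow> S \<subseteq> S2"
  using assoc_E Ea3 mult_e_e by blast

lemma uu_ne0: "uu \<noteq> 0"
  by (simp add: vec_eq_nsb uu_def)

lemma idem_span_u: assumes "mult x x = x" "x \<in> span {uu}" shows "x = 0 \<or> x = uu"
proof -
  obtain c where c: "x = c *\<^sub>R uu" using assms(2) by (auto simp: span_singleton)
  have "mult x x = (c * c) *\<^sub>R uu" unfolding c mult_scale_left mult_scale_right mult_uu_left by simp
  then have "(c * c) *\<^sub>R uu = c *\<^sub>R uu" using assms(1) c by simp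
  then have "c * c = c" using uu_ne0 by (metis scaleR_cancel_right)
  then have "c = 0 \<or> c = 1" by (metis mult_cancel_right1 mult_zero_right)
  then show ?thesis using c by auto
qed

lemma tr_add: "tr (x + y) = tr x + tr y" and tr_diff: "tr (x - y) = tr x - tr y"
  and tr_uu: "tr uu = 4"
  by (simp_all add: tr_coord uu_def)

lemma tr_idem_pos: assumes "mult x x = x" "x \<noteq> 0" shows "tr x > 0"
proof -
  have "tr x = Bf (mult x x) uu" using assms(1) by (simp add: tr_def)
  also have "\<dots> = Bf x x" by (simp add: Bf_assoc mult_uu_right)
  finally show ?thesis using Bf_pos[OF assms(2)] by simp
qed

lemma tr_idem_vals: assumes "mult x x = x" "x \<noteq> 0"
  shows "tr x \<in> {1, 12/7, 2, 16/7, 3, 4}"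
  using idem_trace(1)[OF assms(1)] tr_idem_pos[OF assms] by auto

lemma trace_combo:
  fixes a b c :: real
  assumes "a \<in> {1, 12/7, 2, 16/7, 3, 4}" "b \<in> {1, 12/7, 2, 16/7, 3, 4}" "c \<in> {1, 12/7, 2, 16/7, 3, 4}"
    and "a + b + c = 4"
  shows "(a = 1 \<and> b = 1) \<or> (a = 1 \<and> c = 1) \<or> (b = 1 \<and> c = 1)"
  using assms by auto

lemma axes_pair:
  assumes "x = e A0 \<or> x = e A1 \<or> x = e A2 \<or> x = e A3"
    and "y = e A0 \<or> y = e A1 \<or> y = e A2 \<or> y = e A3"
    and "mult x y = 0"
  shows "(x = e A0 \<and> y = e A2) \<or> (x = e A2 \<and> y = e A0) \<or> (x = e A1 \<and> y = e A3) \<or> (x = e A3 \<and> y = e A1)"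
  using assms by (auto simp: vec_eq_nsb mult_nth)

lemma pair_gives:
  assumes A: "assoc_subalgebra S" and uS: "uu \<in> S" and xS: "x \<in> S" and yS: "y \<in> S"
    and "x = e A0 \<or> x = e A1 \<or> x = e A2 \<or> x = e A3"
    and "y = e A0 \<or> y = e A1 \<or> y = e A2 \<or> y = e A3"
    and "mult x y = 0"
  shows "S = S1 \<or> S = S2"
proof -
  have sub: "subspace S" using A unfolding assoc_subalgebra_def subalgebra_def by blast
  from axes_pair[OF assms(5-7)] have "(e A0 \<in> S \<and> e A2 \<in> S) \<or> (e A1 \<in> S \<and> e A3 \<in> S)"
    using xS yS by blast
  then show ?thesis
  proof
    assume h: "e A0 \<in> S \<and> e A2 \<in> S"
    then have "S \<subseteq> S1" using S_le_S1 A by blast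
    moreover have "S1 \<subseteq> S" using S1_sub sub h uS by blast
    ultimately show ?thesis by blast
  next
    assume h: "e A1 \<in> S \<and> e A3 \<in> S"
    then have "S \<subseteq> S2" using S_le_S2 A by blast
    moreover have "S2 \<subseteq> S" using S2_sub sub h uS by blast
    ultimately show ?thesis by blast
  qed
qed

lemma three_idem:
  assumes A: "assoc_subalgebra S" and uS: "uu \<in> S"
    and S: "e1 \<in> S" "e2 \<in> S" "e3 \<in> S"
    and I: "mult e1 e1 = e1" "mult e2 e2 = e2" "mult e3 e3 = e3"
    and N: "e1 \<noteq> 0" "e2 \<noteq> 0" "e3 \<noteq> 0"
    and O: "mult e1 e2 = 0" "mult e1 e3 = 0" "mult e2 e3 = 0"
    and sum: "e1 + e2 + e3 = uu"
  shows "S = S1 \<or> S = S2"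
proof -
  have t: "tr e1 \<in> {1, 12/7, 2, 16/7, 3, 4}" "tr e2 \<in> {1, 12/7, 2, 16/7, 3, 4}" "tr e3 \<in> {1, 12/7, 2, 16/7, 3, 4}"
    using tr_idem_vals I N by blast+
  have "tr e1 + tr e2 + tr e3 = 4" using sum tr_uu by (metis tr_add)
  from trace_combo[OF t this]
  have "(tr e1 = 1 \<and> tr e2 = 1) \<or> (tr e1 = 1 \<and> tr e3 = 1) \<or> (tr e2 = 1 \<and> tr e3 = 1)" .
  moreover have ax: "\<And>x. mult x x = x \<Longrightarrow> tr x = 1 \<Longrightarrow> x = e A0 \<or> x = e A1 \<or> x = e A2 \<or> x = e A3"
    using idem_trace(2) by blast
  ultimately show ?thesis
    using pair_gives[OF A uS] S I O ax by metis
qed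




lemma core:
  assumes A: "assoc_subalgebra S" and uS: "uu \<in> S" and big: "\<And>y. \<not> S \<subseteq> span {uu, y}"
  shows "S = S1 \<or> S = S2"
proof -
  have sub: "subspace S" and cl: "\<And>x y. x\<in>S \<Longrightarrow> y\<in>S \<Longrightarrow> mult x y \<in> S"
    and as: "\<And>x y z. x\<in>S \<Longrightarrow> y\<in>S \<Longrightarrow> z\<in>S \<Longrightarrow> mult (mult x y) z = mult x (mult y z)"
    using A unfolding assoc_subalgebra_def subalgebra_def by blast+
  have unitu: "\<And>s. s \<in> S \<Longrightarrow> mult uu s = s" by (simp add: mult_uu_left)
  obtain w0 where w0: "w0 \<in> S" "w0 \<notin> span {uu}"
  proof -
    have "\<not> S \<subseteq> span {uu, uu}" using big by blast
    then show ?thesis using that by auto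
  qed
  obtain e where eS: "e \<in> S" and ee: "mult e e = e" and e0: "e \<noteq> 0" and eu: "e \<noteq> uu"
    using exists_idem[OF sub cl uS unitu w0] by blast
  define f where "f = uu - e"
  have fS: "f \<in> S" using sub uS eS by (simp add: f_def subspace_diff)
  have ff: "mult f f = f" unfolding f_def
    by (simp add: mult_diff_left mult_diff_right mult_uu_left mult_uu_right ee)
  have f0: "f \<noteq> 0" using eu f_def by simp
  have fu: "f \<noteq> uu" using e0 f_def by simp
  have claim: "S = S1 \<or> S = S2"
    if pS: "p \<in> S" and pp: "mult p p = p" and p0: "p \<noteq> 0" and pu: "p \<noteq> uu"
      and ex: "\<exists>w\<in>(\<lambda>s. mult p s) ` S. w \<notin> span {p}" for p
  proof -
    define Sp where "Sp = (\<lambda>s. mult p s) ` S"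
    have Sp_sub: "subspace Sp"
      unfolding Sp_def
    proof (rule subspaceI)
      show "0 \<in> (\<lambda>s. mult p s) ` S" using subspace_0[OF sub] by (metis image_eqI mult_zero_right)
    next
      fix x y assume "x \<in> (\<lambda>s. mult p s) ` S" "y \<in> (\<lambda>s. mult p s) ` S"
      then obtain s s' where "s \<in> S" "s' \<in> S" "x = mult p s" "y = mult p s'" by blast
      then show "x + y \<in> (\<lambda>s. mult p s) ` S" using subspace_add[OF sub] by (metis image_eqI mult_add_right)
    next
      fix c x assume "x \<in> (\<lambda>s. mult p s) ` S"
      then obtain s where "s \<in> S" "x = mult p s" by blast
      then show "c *\<^sub>R x \<in> (\<lambda>s. mult p s) ` S" using subspace_scale[OF sub] by (metis image_eqI mult_scale_right)
    qed
    have SpS: "Sp \<subseteq> S" using cl pS unfolding Sp_def by blast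
    have Sp_cl: "mult x y \<in> Sp" if xy: "x \<in> Sp" "y \<in> Sp" for x y
    proof -
      obtain s s' where s: "s \<in> S" "s' \<in> S" "x = mult p s" "y = mult p s'" using xy Sp_def by blast
      have "mult x y = mult p (mult s (mult p s'))" using as[OF pS s(1) cl[OF pS s(2)]] s by simp
      moreover have "mult s (mult p s') \<in> S" using cl s pS by blast
      ultimately show ?thesis unfolding Sp_def by blast
    qed
    have Sp_unit: "mult p x = x" if xx: "x \<in> Sp" for x
    proof -
      obtain s where s: "s \<in> S" "x = mult p s" using xx Sp_def by blast
      show ?thesis using as[OF pS pS s(1)] pp s by simp
    qed
    have pSp: "p \<in> Sp" unfolding Sp_def using pS pp by (metis image_eqI)
    obtain w where w: "w \<in> Sp" "w \<notin> span {p}" using ex Sp_def by blast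
    obtain g where gSp: "g \<in> Sp" and gg: "mult g g = g" and g0: "g \<noteq> 0" and gp: "g \<noteq> p"
      using exists_idem[OF Sp_sub Sp_cl pSp Sp_unit w] by blast
    have gS: "g \<in> S" using SpS gSp by blast
    have pg: "mult p g = g" using Sp_unit gSp by blast
    have gp': "mult g p = g" using pg mult_comm by metis
    define q where "q = uu - p"
    have pgS: "p - g \<in> S" using sub pS gS by (simp add: subspace_diff)
    have qS: "q \<in> S" using sub pS uS by (simp add: q_def subspace_diff)
    have i2: "mult (p - g) (p - g) = p - g"
      by (simp add: mult_diff_left mult_diff_right pp pg gp' gg)
    have i3: "mult q q = q" unfolding q_def
      by (simp add: mult_diff_left mult_diff_right mult_uu_left mult_uu_right pp)
    have n2: "p - g \<noteq> 0" using gp by simp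
    have n3: "q \<noteq> 0" using pu q_def by simp
    have o12: "mult g (p - g) = 0" by (simp add: mult_diff_right gp' gg)
    have o13: "mult g q = 0" unfolding q_def by (simp add: mult_diff_right mult_uu_right gp')
    have o23: "mult (p - g) q = 0" unfolding q_def
      by (simp add: mult_diff_right mult_diff_left mult_uu_right pp gp')
    have sm: "g + (p - g) + q = uu" unfolding q_def by simp
    show ?thesis using three_idem[OF A uS gS pgS qS gg i2 i3 g0 n2 n3 o12 o13 o23 sm] .
  qed
  show ?thesis
  proof (cases "\<exists>w\<in>(\<lambda>s. mult e s) ` S. w \<notin> span {e}")
    case True then show ?thesis using claim[OF eS ee e0 eu] by blast
  next
    case False
    show ?thesis
    proof (cases "\<exists>w\<in>(\<lambda>s. mult f s) ` S. w \<notin> span {f}")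
      case True then show ?thesis using claim[OF fS ff f0 fu] by blast
    next
      case False2: False
      have "S \<subseteq> span {uu, e}"
      proof
        fix s assume sS: "s \<in> S"
        have "mult e s \<in> span {e}" using False sS by blast
        moreover have "mult f s \<in> span {f}" using False2 sS by blast
        moreover have "span {e} \<subseteq> span {uu, e}" by (rule span_mono) blast
        moreover have "span {f} \<subseteq> span {uu, e}"
          by (rule span_minimal) (simp_all add: f_def span_diff span_base)
        moreover have "s = mult e s + mult f s" unfolding f_def by (simp add: mult_diff_left mult_uu_left)
        ultimately show "s \<in> span {uu, e}" by (metis span_add subsetD)
      qed
      then show ?thesis using big by blast
    qed
  qed
qed


lemma span_pair_in: "uu \<in> span {uu, x}" "x \<in> span {uu, x}"
  by (simp_all add: span_base)

lemma Vx_eq: "Vx x = span {uu, x}"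
  unfolding Vx_def one4A_eq
proof (rule subset_antisym)
  show "span {x, uu - x} \<subseteq> span {uu, x}"
    by (rule span_minimal) (simp_all add: span_base span_diff)
  have "uu = x + (uu - x)" by simp
  then have "uu \<in> span {x, uu - x}" by (metis span_add span_base insertI1 insertI2 singletonI)
  then show "span {uu, x} \<subseteq> span {x, uu - x}"
    by (intro span_minimal) (simp_all add: span_base)
qed

lemma mult_pair:
  assumes "mult x x = x"
  shows "mult (a *\<^sub>R uu + b *\<^sub>R x) (c *\<^sub>R uu + d *\<^sub>R x) = (a * c) *\<^sub>R uu + (a * d + b * c + b * d) *\<^sub>R x"
  by (simp add: mult_add_left mult_add_right mult_scale_left mult_scale_right mult_uu_left mult_uu_right
      assms scaleR_add_left add_ac) (simp add: algebra_simps)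

lemma Vx_assoc: assumes xx: "mult x x = x" shows "assoc_subalgebra (Vx x)"
proof -
  have mem: "y \<in> Vx x \<longleftrightarrow> (\<exists>a b. y = a *\<^sub>R uu + b *\<^sub>R x)" for y
    unfolding Vx_eq span_pair_iff ..
  have cl: "mult y z \<in> Vx x" if yz: "y \<in> Vx x" "z \<in> Vx x" for y z
  proof -
    obtain a b c d where "y = a *\<^sub>R uu + b *\<^sub>R x" "z = c *\<^sub>R uu + d *\<^sub>R x" using yz mem by blast
    then show ?thesis unfolding mem using mult_pair[OF xx] by blast
  qed
  have as: "mult (mult y z) w = mult y (mult z w)" if yzw: "y \<in> Vx x" "z \<in> Vx x" "w \<in> Vx x" for y z w
  proof -
    obtain a b where y: "y = a *\<^sub>R uu + b *\<^sub>R x" using yzw(1) mem by blast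
    obtain c d where z: "z = c *\<^sub>R uu + d *\<^sub>R x" using yzw(2) mem by blast
    obtain f g where w: "w = f *\<^sub>R uu + g *\<^sub>R x" using yzw(3) mem by blast
    have l: "mult (mult y z) w = (a*c*f) *\<^sub>R uu + ((a*c)*g + (a*d+b*c+b*d)*f + (a*d+b*c+b*d)*g) *\<^sub>R x"
      unfolding y z w by (simp only: mult_pair[OF xx])
    have r: "mult y (mult z w) = (a*(c*f)) *\<^sub>R uu + (a*(c*g+d*f+d*g) + b*(c*f) + b*(c*g+d*f+d*g)) *\<^sub>R x"
      unfolding y z w by (simp only: mult_pair[OF xx])
    have c1: "a*c*f = a*(c*f)" by simp
    have c2: "(a*c)*g + (a*d+b*c+b*d)*f + (a*d+b*c+b*d)*g = a*(c*g+d*f+d*g) + b*(c*f) + b*(c*g+d*f+d*g)"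
      by (simp add: algebra_simps)
    show ?thesis unfolding l r c1 c2 ..
  qed
  show ?thesis unfolding assoc_subalgebra_def subalgebra_def
    using cl as by (simp add: Vx_eq)
qed

lemma ext_unit_assoc:
  assumes A: "assoc_subalgebra M"
  shows "assoc_subalgebra {s + c *\<^sub>R uu | s c. s \<in> M}" (is "assoc_subalgebra ?T")
proof -
  have sub: "subspace M" and cl: "\<And>x y. x\<in>M \<Longrightarrow> y\<in>M \<Longrightarrow> mult x y \<in> M"
    and as: "\<And>x y z. x\<in>M \<Longrightarrow> y\<in>M \<Longrightarrow> z\<in>M \<Longrightarrow> mult (mult x y) z = mult x (mult y z)"
    using A unfolding assoc_subalgebra_def subalgebra_def by blast+
  have mlu: "mult (s + c *\<^sub>R uu) y = mult s y + c *\<^sub>R y" for s c y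
    by (simp add: mult_add_left mult_scale_left mult_uu_left)
  have mru: "mult y (s + c *\<^sub>R uu) = mult y s + c *\<^sub>R y" for s c y
    by (simp add: mult_add_right mult_scale_right mult_uu_right)
  have subT: "subspace ?T"
  proof (rule subspaceI)
    show "0 \<in> ?T" using subspace_0[OF sub] by (metis (mono_tags, lifting) add_0 mem_Collect_eq scale_zero_left)
  next
    fix x y assume "x \<in> ?T" "y \<in> ?T"
    then obtain s c s' c' where "s \<in> M" "s' \<in> M" "x = s + c *\<^sub>R uu" "y = s' + c' *\<^sub>R uu" by blast
    moreover have "s + c *\<^sub>R uu + (s' + c' *\<^sub>R uu) = (s + s') + (c + c') *\<^sub>R uu" by (simp add: algebra_simps)
    ultimately show "x + y \<in> ?T" using subspace_add[OF sub] by blast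
  next
    fix k x assume "x \<in> ?T"
    then obtain s c where "s \<in> M" "x = s + c *\<^sub>R uu" by blast
    moreover have "k *\<^sub>R (s + c *\<^sub>R uu) = k *\<^sub>R s + (k * c) *\<^sub>R uu" by (simp add: algebra_simps)
    ultimately show "k *\<^sub>R x \<in> ?T" using subspace_scale[OF sub] by blast
  qed
  have clT: "mult x y \<in> ?T" if xy: "x \<in> ?T" "y \<in> ?T" for x y
  proof -
    obtain s c where h1: "s \<in> M" "x = s + c *\<^sub>R uu" using xy(1) by blast
    obtain s' c' where h2: "s' \<in> M" "y = s' + c' *\<^sub>R uu" using xy(2) by blast
    note h = h1(1) h2(1) h1(2) h2(2)
    have "mult x y = (mult s s' + c' *\<^sub>R s + c *\<^sub>R s') + (c * c') *\<^sub>R uu"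
      unfolding h mlu mru by (simp add: mult_scale_right mult_uu_right algebra_simps)
    moreover have "mult s s' + c' *\<^sub>R s + c *\<^sub>R s' \<in> M"
      using h cl sub by (intro subspace_add subspace_scale) simp_all
    ultimately show ?thesis by blast
  qed
  have asT: "mult (mult x y) z = mult x (mult y z)" if xyz: "x \<in> ?T" "y \<in> ?T" "z \<in> ?T" for x y z
  proof -
    obtain s1 c1 where h1: "s1 \<in> M" "x = s1 + c1 *\<^sub>R uu" using xyz(1) by blast
    obtain s2 c2 where h2: "s2 \<in> M" "y = s2 + c2 *\<^sub>R uu" using xyz(2) by blast
    obtain s3 c3 where h3: "s3 \<in> M" "z = s3 + c3 *\<^sub>R uu" using xyz(3) by blast
    note h = h1(1) h2(1) h3(1) h1(2) h2(2) h3(2)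
    have a: "mult (mult s1 s2) s3 = mult s1 (mult s2 s3)" using as h by blast
    show ?thesis unfolding h(4-6)
      by (simp add: mult_add_left mult_add_right mult_scale_left mult_scale_right mult_uu_left mult_uu_right a
          scaleR_add_right add_ac)
  qed
  show ?thesis unfolding assoc_subalgebra_def subalgebra_def using subT clT asT by blast
qed

lemma uu_in_max:
  assumes "max_assoc_subalgebra M" shows "uu \<in> M"
proof -
  let ?T = "{s + c *\<^sub>R uu | s c. s \<in> M}"
  have A: "assoc_subalgebra M" using assms unfolding max_assoc_subalgebra_def by blast
  have "M \<subseteq> ?T" by (force intro: exI[of _ 0])
  then have "?T = M" using assms ext_unit_assoc[OF A] unfolding max_assoc_subalgebra_def by blast
  moreover have "uu \<in> ?T"
  proof -
    have "0 \<in> M" using A unfolding assoc_subalgebra_def subalgebra_def by (simp add: subspace_0)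
    then show ?thesis by (force intro: exI[of _ 0] exI[of _ 1])
  qed
  ultimately show ?thesis by simp
qed

lemma elem_span:
  assumes "S \<subseteq> span {uu, y}" "x \<in> S" "x \<notin> span {uu}"
  shows "S \<subseteq> span {uu, x}"
proof -
  obtain a b where ab: "x = a *\<^sub>R uu + b *\<^sub>R y" using assms(1,2) span_pair_iff by blast
  have b0: "b \<noteq> 0"
  proof
    assume "b = 0"
    then have "x = a *\<^sub>R uu" using ab by simp
    then have "x \<in> span {uu}" by (simp add: span_base span_scale)
    then show False using assms(3) by blast
  qed
  have "y = (1 / b) *\<^sub>R (x - a *\<^sub>R uu)" using ab b0 by (simp add: algebra_simps)
  then have "y \<in> span {uu, x}" by (simp add: span_base span_diff span_scale)
  then have "span {uu, y} \<subseteq> span {uu, x}" by (intro span_minimal) (simp_all add: span_base)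
  then show ?thesis using assms(1) by blast
qed

lemma S1_not_small: "\<not> S1 \<subseteq> span {uu, y}"
proof
  assume sp: "S1 \<subseteq> span {uu, y}"
  have "e A0 \<in> span {uu, y}" using sp in_S1 by blast
  then obtain a b where h1: "e A0 = a *\<^sub>R uu + b *\<^sub>R y" unfolding span_pair_iff by blast
  have "e A2 \<in> span {uu, y}" using sp in_S1 by blast
  then obtain c d where h2: "e A2 = c *\<^sub>R uu + d *\<^sub>R y" unfolding span_pair_iff by blast
  have v: "d *\<^sub>R e A0 - b *\<^sub>R e A2 = (a * d - b * c) *\<^sub>R uu"
    unfolding h1 h2 by (simp add: algebra_simps)
  have c1: "(d *\<^sub>R e A0 - b *\<^sub>R e A2) $ A1 = ((a * d - b * c) *\<^sub>R uu) $ A1" using v by simp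
  have c0: "(d *\<^sub>R e A0 - b *\<^sub>R e A2) $ A0 = ((a * d - b * c) *\<^sub>R uu) $ A0" using v by simp
  have c2: "(d *\<^sub>R e A0 - b *\<^sub>R e A2) $ A2 = ((a * d - b * c) *\<^sub>R uu) $ A2" using v by simp
  from c1 have k: "a * d - b * c = 0" by (simp add: uu_def)
  from c0 k have "d = 0" by (simp add: uu_def)
  moreover from c2 k have "b = 0" by (simp add: uu_def)
  ultimately have "e A0 = a *\<^sub>R uu" using h1 by simp
  then have "(e A0) $ A0 = (a *\<^sub>R uu) $ A0" "(e A0) $ A1 = (a *\<^sub>R uu) $ A1" by simp_all
  then show False by (simp add: uu_def)
qed

lemma S2_not_small: "\<not> S2 \<subseteq> span {uu, y}"
proof
  assume sp: "S2 \<subseteq> span {uu, y}"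
  have "e A1 \<in> span {uu, y}" using sp in_S2 by blast
  then obtain a b where h1: "e A1 = a *\<^sub>R uu + b *\<^sub>R y" unfolding span_pair_iff by blast
  have "e A3 \<in> span {uu, y}" using sp in_S2 by blast
  then obtain c d where h2: "e A3 = c *\<^sub>R uu + d *\<^sub>R y" unfolding span_pair_iff by blast
  have v: "d *\<^sub>R e A1 - b *\<^sub>R e A3 = (a * d - b * c) *\<^sub>R uu"
    unfolding h1 h2 by (simp add: algebra_simps)
  have c1: "(d *\<^sub>R e A1 - b *\<^sub>R e A3) $ A0 = ((a * d - b * c) *\<^sub>R uu) $ A0" using v by simp
  have c0: "(d *\<^sub>R e A1 - b *\<^sub>R e A3) $ A1 = ((a * d - b * c) *\<^sub>R uu) $ A1" using v by simp
  have c2: "(d *\<^sub>R e A1 - b *\<^sub>R e A3) $ A3 = ((a * d - b * c) *\<^sub>R uu) $ A3" using v by simp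
  from c1 have k: "a * d - b * c = 0" by (simp add: uu_def)
  from c0 k have "d = 0" by (simp add: uu_def)
  moreover from c2 k have "b = 0" by (simp add: uu_def)
  ultimately have "e A1 = a *\<^sub>R uu" using h1 by simp
  then have "(e A1) $ A1 = (a *\<^sub>R uu) $ A1" "(e A1) $ A0 = (a *\<^sub>R uu) $ A0" by simp_all
  then show False by (simp add: uu_def)
qed

lemma small_not_triv:
  assumes "\<And>y. \<not> S \<subseteq> span {uu, y}"
  shows "\<not> trivial_assoc S"
proof
  assume "trivial_assoc S"
  then consider x where "S = Vx x" | "S = {0}" | "S = span {one4A}" unfolding trivial_assoc_def by blast
  then show False
  proof cases
    case (1 x) then show False using assms[of x] Vx_eq by blast
  next
    case 2 then show False using assms[of uu] span_zero by blast
  next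
    case 3 then show False using assms[of uu] one4A_eq by simp
  qed
qed

lemma S1_max: "max_assoc_subalgebra S1"
  unfolding max_assoc_subalgebra_def
proof (intro conjI allI impI S1_assoc_sub)
  fix T assume h: "assoc_subalgebra T \<and> S1 \<subseteq> T"
  then have "e A0 \<in> T" using in_S1 by blast
  then have "T \<subseteq> S1" using S_le_S1 h by blast
  then show "T = S1" using h by blast
qed
lemma S2_max: "max_assoc_subalgebra S2"
  unfolding max_assoc_subalgebra_def
proof (intro conjI allI impI S2_assoc_sub)
  fix T assume h: "assoc_subalgebra T \<and> S2 \<subseteq> T"
  then have "e A1 \<in> T" using in_S2 by blast
  then have "T \<subseteq> S2" using S_le_S2 h by blast
  then show "T = S2" using h by blast
qed

lemma max_nontriv:
  assumes M: "max_assoc_subalgebra M" and nt: "\<not> trivial_assoc M"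
  shows "M = S1 \<or> M = S2"
proof -
  have A: "assoc_subalgebra M" using M unfolding max_assoc_subalgebra_def by blast
  have sub: "subspace M" and cl: "\<And>x y. x\<in>M \<Longrightarrow> y\<in>M \<Longrightarrow> mult x y \<in> M"
    using A unfolding assoc_subalgebra_def subalgebra_def by blast+
  have uM: "uu \<in> M" using uu_in_max[OF M] .
  show ?thesis
  proof (cases "\<exists>y. M \<subseteq> span {uu, y}")
    case False
    then have "\<And>y. \<not> M \<subseteq> span {uu, y}" by blast
    then show ?thesis by (rule core[OF A uM])
  next
    case True
    then obtain y where y: "M \<subseteq> span {uu, y}" by blast
    show ?thesis
    proof (cases "M \<subseteq> span {uu}")
      case True
      moreover have "span {uu} \<subseteq> M" using uM sub by (intro span_minimal) simp_all
      ultimately have "M = span {uu}" by (rule subset_antisym)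
      then have "M = span {one4A}" by (simp add: one4A_eq)
      then show ?thesis using nt unfolding trivial_assoc_def by blast
    next
      case False
      then obtain w0 where w0: "w0 \<in> M" "w0 \<notin> span {uu}" by blast
      have unitu: "\<And>s. s \<in> M \<Longrightarrow> mult uu s = s" by (simp add: mult_uu_left)
      obtain e where eM: "e \<in> M" and ee: "mult e e = e" and e0: "e \<noteq> 0" and eu: "e \<noteq> uu"
        using exists_idem[OF sub cl uM unitu w0] by blast
      have "e \<notin> span {uu}" using idem_span_u[OF ee] e0 eu by blast
      then have "M \<subseteq> span {uu, e}" using elem_span[OF y eM] by blast
      moreover have "span {uu, e} \<subseteq> M" using uM eM sub by (intro span_minimal) simp_all
      ultimately have "M = span {uu, e}" by (rule subset_antisym)
      then have Me: "M = Vx e" by (simp add: Vx_eq)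
      have "idempotent e \<and> e \<noteq> 0 \<and> e \<noteq> one4A \<and> M = Vx e"
        unfolding idempotent_def one4A_eq using ee e0 eu Me by blast
      then have "trivial_assoc M" unfolding trivial_assoc_def by blast
      then show ?thesis using nt by blast
    qed
  qed
qed

lemma nontriv_set: "{S. max_assoc_subalgebra S \<and> \<not> trivial_assoc S} = {S1, S2}"
proof (rule subset_antisym)
  show "{S. max_assoc_subalgebra S \<and> \<not> trivial_assoc S} \<subseteq> {S1, S2}"
    using max_nontriv by blast
  have "\<not> trivial_assoc S1" by (rule small_not_triv) (rule S1_not_small)
  moreover have "\<not> trivial_assoc S2" by (rule small_not_triv) (rule S2_not_small)
  ultimately show "{S1, S2} \<subseteq> {S. max_assoc_subalgebra S \<and> \<not> trivial_assoc S}"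
    using S1_max S2_max by blast
qed

lemma S1_ne_S2: "S1 \<noteq> S2"
  using in_S1 eA0_notin_S2 by blast

lemma card_part: "card {S. max_assoc_subalgebra S \<and> \<not> trivial_assoc S} = 2"
  unfolding nontriv_set using S1_ne_S2 by simp


definition xk :: "real \<Rightarrow> v4a" where
  "xk k = mk (2 * (1+k)/(2 * k * k+k+2)) (2 * k * (1+k)/(2 * k * k+k+2)) (2 * (1+k)/(2 * k * k+k+2))
             (2 * k * (1+k)/(2 * k * k+k+2)) (-3 * k/(2 * k * k+k+2))"

lemma Dpos: "k > 0 \<Longrightarrow> 2 * k * k+k+2 > (0::real)"
  by (simp add: add_pos_pos)

lemma W_idem:
  fixes s t r :: real
  assumes "s * s + s * t/4 + s * r/2 - t * r/2 - s = 0"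
    and "t * t + s * t/4 + t * r/2 - s * r/2 - t = 0"
    and "r * r - 3 * s * t/8 + 3 * s * r/4 + 3 * t * r/4 - r = 0"
  shows "mult (mk s t s t r) (mk s t s t r) = mk s t s t r"
  using assms by (simp add: vec_eq_nsb mult_nth field_simps) linarith?

lemma xk_idem: assumes "k > 0" shows "mult (xk k) (xk k) = xk k"
proof -
  have "2 * k * k+k+2 > 0" using assms by (simp add: add_pos_pos)
  then have D: "2 * k * k+k+2 \<noteq> 0" by simp
  define i where "i = 1 / (2 * k * k+k+2)"
  have iD: "i * (2 * k * k+k+2) = 1" using D i_def by simp
  have s: "2 * (1+k)/(2 * k * k+k+2) = 2 * (1+k) * i" unfolding i_def by simp
  have t: "2 * k * (1+k)/(2 * k * k+k+2) = 2 * k * (1+k) * i" unfolding i_def by simp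
  have r: "-3 * k/(2 * k * k+k+2) = -3 * k * i" unfolding i_def by simp
  have 1: "(2 * (1+k) * i) * (2 * (1+k) * i) + (2 * (1+k) * i) * (2 * k * (1+k) * i)/4 + (2 * (1+k) * i) * (-3 * k * i)/2 - (2 * k * (1+k) * i) * (-3 * k * i)/2 - (2 * (1+k) * i) = 0"
    using iD by algebra
  have 2: "(2 * k * (1+k) * i) * (2 * k * (1+k) * i) + (2 * (1+k) * i) * (2 * k * (1+k) * i)/4 + (2 * k * (1+k) * i) * (-3 * k * i)/2 - (2 * (1+k) * i) * (-3 * k * i)/2 - (2 * k * (1+k) * i) = 0"
    using iD by algebra
  have 3: "(-3 * k * i) * (-3 * k * i) - 3 * (2 * (1+k) * i) * (2 * k * (1+k) * i)/8 + 3 * (2 * (1+k) * i) * (-3 * k * i)/4 + 3 * (2 * k * (1+k) * i) * (-3 * k * i)/4 - (-3 * k * i) = 0"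
    using iD by algebra
  show ?thesis using W_idem[OF 1 2 3] unfolding xk_def s t r .
qed
lemma xk_coords: "k > 0 \<Longrightarrow> (xk k)$A0 > 0" "k > 0 \<Longrightarrow> (xk k)$A1 = k * (xk k)$A0"
  "k > 0 \<Longrightarrow> (xk k)$Vv < 0" "k > 0 \<Longrightarrow> (xk k)$A1 > 0"
  using Dpos[of k] by (simp_all add: xk_def)

lemma xk_notS1: "k > 0 \<Longrightarrow> xk k \<notin> S1"
  using xk_coords(3,4)[of k] by (auto simp: S1_def)
lemma xk_notS2: "k > 0 \<Longrightarrow> xk k \<notin> S2"
  using xk_coords[of k] by (auto simp: S2_def)

lemma xk_ne0: "k > 0 \<Longrightarrow> xk k \<noteq> 0"
  using xk_coords(1)[of k] by auto

lemma xk_neu: assumes "k > 1" shows "xk k \<noteq> uu"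
proof
  assume h: "xk k = uu"
  have "(xk k)$A1 = (xk k)$A0" using h by (simp add: uu_def)
  moreover have "(xk k)$A1 = k * (xk k)$A0" "(xk k)$A0 > 0" using xk_coords assms by auto
  ultimately show False using assms by simp
qed

lemma xk_inj: assumes "k > 0" "k' > 0" "xk k = xk k'" shows "k = k'"
proof -
  have e1: "(xk k)$A1 = k * (xk k)$A0" using xk_coords(2) assms(1) by blast
  have e2: "(xk k)$A1 = k' * (xk k)$A0" using xk_coords(2)[of k'] assms(2,3) by simp
  have p: "(xk k)$A0 > 0" using xk_coords(1) assms(1) by blast
  have "k * (xk k)$A0 = k' * (xk k)$A0" using trans[OF sym[OF e1] e2] .
  then show ?thesis using p by simp
qed

lemma xk_notspan: assumes "k > 1" shows "xk k \<notin> span {uu}"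
proof
  assume "xk k \<in> span {uu}"
  then have "xk k = 0 \<or> xk k = uu" using idem_span_u xk_idem assms by simp
  then show False using xk_ne0 xk_neu assms by simp
qed

lemma Vx_xk_max: assumes k: "k > 1" shows "max_assoc_subalgebra (Vx (xk k))"
proof -
  let ?x = "xk k"
  have k0: "k > 0" using k by simp
  have xx: "mult ?x ?x = ?x" using xk_idem[OF k0] .
  show ?thesis unfolding max_assoc_subalgebra_def
  proof (intro conjI allI impI Vx_assoc[OF xx])
    fix T assume h: "assoc_subalgebra T \<and> Vx ?x \<subseteq> T"
    have uT: "uu \<in> T" using h span_pair_in(1) Vx_eq by blast
    have xT: "?x \<in> T" using h span_pair_in(2) Vx_eq by blast
    show "T = Vx ?x"
    proof (cases "\<exists>y. T \<subseteq> span {uu, y}")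
      case True
      then obtain y where y: "T \<subseteq> span {uu, y}" by blast
      have "T \<subseteq> span {uu, ?x}" using elem_span[OF y xT xk_notspan[OF k]] .
      then show ?thesis using h by (simp add: Vx_eq)
    next
      case False
      then have "\<And>y. \<not> T \<subseteq> span {uu, y}" by blast
      moreover have "assoc_subalgebra T" using h by blast
      ultimately have "T = S1 \<or> T = S2" using core uT by blast
      then show ?thesis using xT xk_notS1[OF k0] xk_notS2[OF k0] by blast
    qed
  qed
qed

lemma fiber:
  assumes k: "k > 1" and k': "k' > 1" and eq: "Vx (xk k') = Vx (xk k)"
  shows "xk k' = xk k \<or> xk k' = uu - xk k"
proof -
  let ?x = "xk k" and ?y = "xk k'"
  have xx: "mult ?x ?x = ?x" using xk_idem k by simp
  have yy: "mult ?y ?y = ?y" using xk_idem k' by simp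
  have "?y \<in> Vx ?y" by (simp add: Vx_eq span_pair_in)
  then have "?y \<in> Vx ?x" using eq by simp
  then have "?y \<in> span {uu, ?x}" by (simp add: Vx_eq)
  then obtain a b where y: "?y = a *\<^sub>R uu + b *\<^sub>R ?x" unfolding span_pair_iff by blast
  have "mult ?y ?y = (a * a) *\<^sub>R uu + (a * b + b * a + b * b) *\<^sub>R ?x"
    unfolding y by (rule mult_pair[OF xx])
  then have v: "(a * a) *\<^sub>R uu + (a * b + b * a + b * b) *\<^sub>R ?x = a *\<^sub>R uu + b *\<^sub>R ?x"
    using yy y by simp
  have cb: "a * b + b * a + b * b - b = 0"
  proof (rule ccontr)
    assume nz: "a * b + b * a + b * b - b \<noteq> 0"
    define c where "c = a * b + b * a + b * b - b"
    have w: "c *\<^sub>R ?x = (a - a * a) *\<^sub>R uu"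
      using v unfolding c_def by (simp add: algebra_simps)
    have cnz: "c \<noteq> 0" using nz c_def by simp
    have "?x = (1 / c) *\<^sub>R (c *\<^sub>R ?x)" using cnz by simp
    also have "\<dots> = ((1 / c) * (a - a * a)) *\<^sub>R uu" unfolding w by simp
    finally have "?x = ((1 / c) * (a - a * a)) *\<^sub>R uu" .
    then have "?x \<in> span {uu}" by (simp add: span_base span_scale)
    then show False using xk_notspan[OF k] by blast
  qed
  then have "(a * a - a) *\<^sub>R uu = 0" using v by (simp add: algebra_simps)
  then have ca: "a * a - a = 0" using uu_ne0 by simp
  have yne0: "?y \<noteq> 0" using xk_ne0 k' by simp
  have yneu: "?y \<noteq> uu" using xk_neu k' by simp
  from ca have "a * (a - 1) = 0" by (simp add: algebra_simps)
  then have "a = 0 \<or> a = 1" by simp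
  then show ?thesis
  proof
    assume a0: "a = 0"
    then have "b * b - b = 0" using cb by simp
    then have "b * (b - 1) = 0" by (simp add: algebra_simps)
    then have "b = 0 \<or> b = 1" by simp
    then show ?thesis using y a0 yne0 by auto
  next
    assume a1: "a = 1"
    then have "b * b + b = 0" using cb by simp
    then have "b * (b + 1) = 0" by (simp add: algebra_simps)
    then have "b = 0 \<or> b = -1" by auto
    then show ?thesis using y a1 yneu by auto
  qed
qed

lemma infinite_part: "infinite {S. max_assoc_subalgebra S}"
proof -
  define g where "g m = xk (real m + 2)" for m :: nat
  define F where "F m = Vx (g m)" for m
  have injg: "inj g"
  proof (rule injI)
    fix m m' assume "g m = g m'"
    then have "real m + 2 = real m' + 2" unfolding g_def by (rule xk_inj[rotated 2]) simp_all
    then show "m = m'" by simp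
  qed
  have maxF: "range F \<subseteq> {S. max_assoc_subalgebra S}"
    unfolding F_def g_def using Vx_xk_max by (auto simp: add_pos_nonneg)
  have "infinite (range F)"
  proof
    assume fin: "finite (range F)"
    have "finite (F -` range F \<inter> UNIV)"
    proof (rule finite_finite_vimage_IntI[OF fin])
      fix V assume "V \<in> range F"
      then obtain m0 where V: "V = F m0" by blast
      have "F -` {V} \<inter> UNIV \<subseteq> g -` {g m0, uu - g m0}"
      proof
        fix m assume "m \<in> F -` {V} \<inter> UNIV"
        then have "Vx (g m) = Vx (g m0)" using V F_def by simp
        then have "g m = g m0 \<or> g m = uu - g m0" unfolding g_def by (intro fiber) simp_all
        then show "m \<in> g -` {g m0, uu - g m0}" by auto
      qed
      moreover have "finite (g -` {g m0, uu - g m0})" using injg by (intro finite_vimageI) simp_all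
      ultimately show "finite (F -` {V} \<inter> UNIV)" by (rule finite_subset)
    qed
    moreover have "F -` range F \<inter> UNIV = UNIV" by auto
    ultimately show False by simp
  qed
  then show ?thesis using maxF infinite_super by blast
qed



theorem mainTheorem10:
  shows "infinite {S. max_assoc_subalgebra S}
         \<and> card {S. max_assoc_subalgebra S \<and> \<not> trivial_assoc S} = 2"
  using infinite_part card_part by blast

end
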